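(* For every 2-qubit pure state $\rho$, its posterior $\chi^2$ divergence information content satisfies $I_{\chi^2,post}(\rho)\le 2$, and the value $2$ is attained by some 2-qubit pure state. In other words, the upper bound on the posterior information content of the 2-qubit pure state system is exactly $2$.
   Context: Let $\sigma_1=\begin{pmatrix}0&1\\1&0\end{pmatrix}$, $\sigma_2=\begin{pmatrix}0&-i\\i&0\end{pmatrix}$, $\sigma_3=\begin{pmatrix}1&0\\0&-1\end{pmatrix}$. For a 2-qubit density matrix $\rho$ its Bloch vector is $(b_1,\dots,b_{16})$, where $b_1=\operatorname{tr}\rho=1$; $(b_2,b_3,b_4)=\boldsymbol{\alpha}$ with $\alpha_j=\operatorname{tr}((\sigma_j\otimes I)\rho)$; $(b_5,b_6,b_7)=\boldsymbol{\beta}$ with $\beta_j=\operatorname{tr}((I\otimes\sigma_j)\rho)$; and $(b_8,\dots,b_{16})$ are the entries $C_{jk}=\operatorname{tr}((\sigma_j\otimes\sigma_k)\rho)$ of the $3\times3$ correlation matrix $C$ listed in row-major order. A pure state is $\rho=|\psi\rangle\langle\psi|$ with $|\psi\rangle\in\mathbb{C}^2\otimes\mathbb{C}^2$ a unit vector. For $b\in[-1,1]$ and $h\in(-1,1)$ define $D_{\chi^2}(b,h)=\frac{((b+1)/2)^2}{(h+1)/2}+\frac{((1-b)/2)^2}{(1-h)/2}-1$; if $h=\pm1$ and $b=h$, set $D_{\chi^2}(b,h)=0$. The posterior $\chi^2$ divergence information content of a 2-qubit pure state with Bloch vector $(b_1,\dots,b_{16})$ is defined as follows. For each $i=2,\dots,16$,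 let $b_i^{max}$ and $b_i^{min}$ be the maximum and the minimum of the $i$-th Bloch component over all 2-qubit pure states whose Bloch components $1,\dots,i-1$ coincide with $b_1,\dots,b_{i-1}$. Put $h_i=(b_i^{max}+b_i^{min})/2$. Then $I_{\chi^2,post}=\sum_{i=2}^{16}D_{\chi^2}(b_i,h_i)$. *)

theory Defs
  imports Complex_Main
begin

text \<open>Single-qubit Pauli matrices as functions on indices 0,1:
  index 0 is the identity, 1,2,3 are sigma_1, sigma_2, sigma_3.\<close>
definition pauli :: "nat \<Rightarrow> nat \<Rightarrow> nat \<Rightarrow> complex" where
  "pauli m r s =
     (if m = 0 then (if r = s then 1 else 0)
      else if m = 1 then (if r \<noteq> s then 1 else 0)
      else if m = 2 then (if r = 0 \<and> s = 1 then - \<i> else if r = 1 \<and> s = 0 then \<i> else 0)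
      else (if r = s then (if r = 0 then 1 else -1) else 0))"

text \<open>Kronecker product on C^2 (x) C^2, basis |a b> at index 2a+b.\<close>
definition tensor2 :: "(nat \<Rightarrow> nat \<Rightarrow> complex) \<Rightarrow> (nat \<Rightarrow> nat \<Rightarrow> complex) \<Rightarrow> nat \<Rightarrow> nat \<Rightarrow> complex" where
  "tensor2 A B r s = A (r div 2) (s div 2) * B (r mod 2) (s mod 2)"

text \<open>Pair of Pauli indices (for first and second qubit) for Bloch component i (1..16):
  1: I(x)I; 2..4: sigma_j(x)I; 5..7: I(x)sigma_j; 8..16: sigma_j(x)sigma_k row-major.\<close>
definition bloch_idx :: "nat \<Rightarrow> nat \<times> nat" where
  "bloch_idx i =
     (if i = 1 then (0, 0)
      else if 2 \<le> i \<and> i \<le> 4 then (i - 1, 0)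
      else if 5 \<le> i \<and> i \<le> 7 then (0, i - 4)
      else ((i - 8) div 3 + 1, (i - 8) mod 3 + 1))"

definition obs :: "nat \<Rightarrow> nat \<Rightarrow> nat \<Rightarrow> complex" where
  "obs i = tensor2 (pauli (fst (bloch_idx i))) (pauli (snd (bloch_idx i)))"

definition pure_state :: "(nat \<Rightarrow> complex) \<Rightarrow> bool" where
  "pure_state psi \<longleftrightarrow> (\<Sum>r<4. (cmod (psi r))\<^sup>2) = 1"

text \<open>Bloch component i of rho = |psi><psi|: tr(obs_i rho) = <psi| obs_i |psi> (real, as obs_i is Hermitian).\<close>
definition bloch :: "(nat \<Rightarrow> complex) \<Rightarrow> nat \<Rightarrow> real" where
  "bloch psi i = Re (\<Sum>r<4. \<Sum>s<4. cnj (psi r) * obs i r s * psi s)"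

definition cond_vals :: "(nat \<Rightarrow> complex) \<Rightarrow> nat \<Rightarrow> real set" where
  "cond_vals psi i = {bloch phi i | phi. pure_state phi \<and> (\<forall>j\<in>{1..<i}. bloch phi j = bloch psi j)}"

definition bmax :: "(nat \<Rightarrow> complex) \<Rightarrow> nat \<Rightarrow> real" where
  "bmax psi i = Sup (cond_vals psi i)"

definition bmin :: "(nat \<Rightarrow> complex) \<Rightarrow> nat \<Rightarrow> real" where
  "bmin psi i = Inf (cond_vals psi i)"

definition hmid :: "(nat \<Rightarrow> complex) \<Rightarrow> nat \<Rightarrow> real" where
  "hmid psi i = (bmax psi i + bmin psi i) / 2"

text \<open>chi^2 divergence; the boundary case h = +-1 (where necessarily b = h) is 0.\<close>
definition D_chi2 :: "real \<Rightarrow> real \<Rightarrow> real" where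
  "D_chi2 b h =
     (if h = 1 \<or> h = -1 then 0
      else ((b + 1) / 2)\<^sup>2 / ((h + 1) / 2) + ((1 - b) / 2)\<^sup>2 / ((1 - h) / 2) - 1)"

definition I_chi2_post :: "(nat \<Rightarrow> complex) \<Rightarrow> real" where
  "I_chi2_post psi = (\<Sum>i=2..16. D_chi2 (bloch psi i) (hmid psi i))"

end

theory Submission
  imports Defs
begin

definition bp :: "(nat \<Rightarrow> real) \<Rightarrow> (nat \<Rightarrow> real) \<Rightarrow> nat \<Rightarrow> real" where
  "bp x y i =
  (if i = 1 then x 0 * x 0 + x 1 * x 1 + x 2 * x 2 + x 3 * x 3 + y 0 * y 0 + y 1 * y 1 + y 2 * y 2 + y 3 * y 3
   else  (if i = 2 then 2 * x 0 * x 2 + 2 * x 1 * x 3 + 2 * y 0 * y 2 + 2 * y 1 * y 3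
   else  (if i = 3 then 2 * x 0 * y 2 + 2 * x 1 * y 3 - 2 * x 2 * y 0 - 2 * x 3 * y 1
   else  (if i = 4 then x 0 * x 0 + x 1 * x 1 - x 2 * x 2 - x 3 * x 3 + y 0 * y 0 + y 1 * y 1 - y 2 * y 2 - y 3 * y 3
   else  (if i = 5 then 2 * x 0 * x 1 + 2 * x 2 * x 3 + 2 * y 0 * y 1 + 2 * y 2 * y 3
   else  (if i = 6 then 2 * x 0 * y 1 - 2 * x 1 * y 0 + 2 * x 2 * y 3 - 2 * x 3 * y 2
   else  (if i = 7 then x 0 * x 0 - x 1 * x 1 + x 2 * x 2 - x 3 * x 3 + y 0 * y 0 - y 1 * y 1 + y 2 * y 2 - y 3 * y 3
   else  (if i = 8 then 2 * x 0 * x 3 + 2 * x 1 * x 2 + 2 * y 0 * y 3 + 2 * y 1 * y 2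
   else  (if i = 9 then 2 * x 0 * y 3 - 2 * x 1 * y 2 + 2 * x 2 * y 1 - 2 * x 3 * y 0
   else  (if i = 10 then 2 * x 0 * x 2 - 2 * x 1 * x 3 + 2 * y 0 * y 2 - 2 * y 1 * y 3
   else  (if i = 11 then 2 * x 0 * y 3 + 2 * x 1 * y 2 - 2 * x 2 * y 1 - 2 * x 3 * y 0
   else  (if i = 12 then - 2 * x 0 * x 3 + 2 * x 1 * x 2 - 2 * y 0 * y 3 + 2 * y 1 * y 2
   else  (if i = 13 then 2 * x 0 * y 2 - 2 * x 1 * y 3 - 2 * x 2 * y 0 + 2 * x 3 * y 1
   else  (if i = 14 then 2 * x 0 * x 1 - 2 * x 2 * x 3 + 2 * y 0 * y 1 - 2 * y 2 * y 3
   else  (if i = 15 then 2 * x 0 * y 1 - 2 * x 1 * y 0 - 2 * x 2 * y 3 + 2 * x 3 * y 2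
   else  (if i = 16 then x 0 * x 0 - x 1 * x 1 - x 2 * x 2 + x 3 * x 3 + y 0 * y 0 - y 1 * y 1 - y 2 * y 2 + y 3 * y 3
   else 0))))))))))))))))"

lemma bp_1: "bp x y 1 = x 0 * x 0 + x 1 * x 1 + x 2 * x 2 + x 3 * x 3 + y 0 * y 0 + y 1 * y 1 + y 2 * y 2 + y 3 * y 3"
  by (simp add: bp_def)
lemma bp_2: "bp x y 2 = 2 * x 0 * x 2 + 2 * x 1 * x 3 + 2 * y 0 * y 2 + 2 * y 1 * y 3"
  by (simp add: bp_def)
lemma bp_3: "bp x y 3 = 2 * x 0 * y 2 + 2 * x 1 * y 3 - 2 * x 2 * y 0 - 2 * x 3 * y 1"
  by (simp add: bp_def)
lemma bp_4: "bp x y 4 = x 0 * x 0 + x 1 * x 1 - x 2 * x 2 - x 3 * x 3 + y 0 * y 0 + y 1 * y 1 - y 2 * y 2 - y 3 * y 3"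
  by (simp add: bp_def)
lemma bp_5: "bp x y 5 = 2 * x 0 * x 1 + 2 * x 2 * x 3 + 2 * y 0 * y 1 + 2 * y 2 * y 3"
  by (simp add: bp_def)
lemma bp_6: "bp x y 6 = 2 * x 0 * y 1 - 2 * x 1 * y 0 + 2 * x 2 * y 3 - 2 * x 3 * y 2"
  by (simp add: bp_def)
lemma bp_7: "bp x y 7 = x 0 * x 0 - x 1 * x 1 + x 2 * x 2 - x 3 * x 3 + y 0 * y 0 - y 1 * y 1 + y 2 * y 2 - y 3 * y 3"
  by (simp add: bp_def)
lemma bp_8: "bp x y 8 = 2 * x 0 * x 3 + 2 * x 1 * x 2 + 2 * y 0 * y 3 + 2 * y 1 * y 2"
  by (simp add: bp_def)
lemma bp_9: "bp x y 9 = 2 * x 0 * y 3 - 2 * x 1 * y 2 + 2 * x 2 * y 1 - 2 * x 3 * y 0"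
  by (simp add: bp_def)
lemma bp_10: "bp x y 10 = 2 * x 0 * x 2 - 2 * x 1 * x 3 + 2 * y 0 * y 2 - 2 * y 1 * y 3"
  by (simp add: bp_def)
lemma bp_11: "bp x y 11 = 2 * x 0 * y 3 + 2 * x 1 * y 2 - 2 * x 2 * y 1 - 2 * x 3 * y 0"
  by (simp add: bp_def)
lemma bp_12: "bp x y 12 = - 2 * x 0 * x 3 + 2 * x 1 * x 2 - 2 * y 0 * y 3 + 2 * y 1 * y 2"
  by (simp add: bp_def)
lemma bp_13: "bp x y 13 = 2 * x 0 * y 2 - 2 * x 1 * y 3 - 2 * x 2 * y 0 + 2 * x 3 * y 1"
  by (simp add: bp_def)
lemma bp_14: "bp x y 14 = 2 * x 0 * x 1 - 2 * x 2 * x 3 + 2 * y 0 * y 1 - 2 * y 2 * y 3"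
  by (simp add: bp_def)
lemma bp_15: "bp x y 15 = 2 * x 0 * y 1 - 2 * x 1 * y 0 - 2 * x 2 * y 3 + 2 * x 3 * y 2"
  by (simp add: bp_def)
lemma bp_16: "bp x y 16 = x 0 * x 0 - x 1 * x 1 - x 2 * x 2 + x 3 * x 3 + y 0 * y 0 - y 1 * y 1 - y 2 * y 2 + y 3 * y 3"
  by (simp add: bp_def)
lemma sum4: "(\<Sum>r<(4::nat). f r) = f 0 + f 1 + f 2 + (f 3::'a::comm_monoid_add)"
  by (simp add: eval_nat_numeral add.assoc)

lemma bloch_1: "bloch psi 1 = bp (\<lambda>k. Re (psi k)) (\<lambda>k. Im (psi k)) 1"
  unfolding bloch_def obs_def tensor2_def bloch_idx_def sum4 bp_1
  by (simp add: pauli_def algebra_simps)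

lemma bloch_2: "bloch psi 2 = bp (\<lambda>k. Re (psi k)) (\<lambda>k. Im (psi k)) 2"
  unfolding bloch_def obs_def tensor2_def bloch_idx_def sum4 bp_2
  by (simp add: pauli_def algebra_simps)

lemma bloch_3: "bloch psi 3 = bp (\<lambda>k. Re (psi k)) (\<lambda>k. Im (psi k)) 3"
  unfolding bloch_def obs_def tensor2_def bloch_idx_def sum4 bp_3
  by (simp add: pauli_def algebra_simps)

lemma bloch_4: "bloch psi 4 = bp (\<lambda>k. Re (psi k)) (\<lambda>k. Im (psi k)) 4"
  unfolding bloch_def obs_def tensor2_def bloch_idx_def sum4 bp_4
  by (simp add: pauli_def algebra_simps)

lemma bloch_5: "bloch psi 5 = bp (\<lambda>k. Re (psi k)) (\<lambda>k. Im (psi k)) 5"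
  unfolding bloch_def obs_def tensor2_def bloch_idx_def sum4 bp_5
  by (simp add: pauli_def algebra_simps)

lemma bloch_6: "bloch psi 6 = bp (\<lambda>k. Re (psi k)) (\<lambda>k. Im (psi k)) 6"
  unfolding bloch_def obs_def tensor2_def bloch_idx_def sum4 bp_6
  by (simp add: pauli_def algebra_simps)

lemma bloch_7: "bloch psi 7 = bp (\<lambda>k. Re (psi k)) (\<lambda>k. Im (psi k)) 7"
  unfolding bloch_def obs_def tensor2_def bloch_idx_def sum4 bp_7
  by (simp add: pauli_def algebra_simps)

lemma bloch_8: "bloch psi 8 = bp (\<lambda>k. Re (psi k)) (\<lambda>k. Im (psi k)) 8"
  unfolding bloch_def obs_def tensor2_def bloch_idx_def sum4 bp_8
  by (simp add: pauli_def algebra_simps)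

lemma bloch_9: "bloch psi 9 = bp (\<lambda>k. Re (psi k)) (\<lambda>k. Im (psi k)) 9"
  unfolding bloch_def obs_def tensor2_def bloch_idx_def sum4 bp_9
  by (simp add: pauli_def algebra_simps)

lemma bloch_10: "bloch psi 10 = bp (\<lambda>k. Re (psi k)) (\<lambda>k. Im (psi k)) 10"
  unfolding bloch_def obs_def tensor2_def bloch_idx_def sum4 bp_10
  by (simp add: pauli_def algebra_simps)

lemma bloch_11: "bloch psi 11 = bp (\<lambda>k. Re (psi k)) (\<lambda>k. Im (psi k)) 11"
  unfolding bloch_def obs_def tensor2_def bloch_idx_def sum4 bp_11
  by (simp add: pauli_def algebra_simps)

lemma bloch_12: "bloch psi 12 = bp (\<lambda>k. Re (psi k)) (\<lambda>k. Im (psi k)) 12"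
  unfolding bloch_def obs_def tensor2_def bloch_idx_def sum4 bp_12
  by (simp add: pauli_def algebra_simps)

lemma bloch_13: "bloch psi 13 = bp (\<lambda>k. Re (psi k)) (\<lambda>k. Im (psi k)) 13"
  unfolding bloch_def obs_def tensor2_def bloch_idx_def sum4 bp_13
  by (simp add: pauli_def algebra_simps)

lemma bloch_14: "bloch psi 14 = bp (\<lambda>k. Re (psi k)) (\<lambda>k. Im (psi k)) 14"
  unfolding bloch_def obs_def tensor2_def bloch_idx_def sum4 bp_14
  by (simp add: pauli_def algebra_simps)

lemma bloch_15: "bloch psi 15 = bp (\<lambda>k. Re (psi k)) (\<lambda>k. Im (psi k)) 15"
  unfolding bloch_def obs_def tensor2_def bloch_idx_def sum4 bp_15
  by (simp add: pauli_def algebra_simps)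

lemma bloch_16: "bloch psi 16 = bp (\<lambda>k. Re (psi k)) (\<lambda>k. Im (psi k)) 16"
  unfolding bloch_def obs_def tensor2_def bloch_idx_def sum4 bp_16
  by (simp add: pauli_def algebra_simps)

lemma pure_n: assumes "pure_state p" shows "bloch p 1 = 1"
  using assms unfolding pure_state_def bloch_1 bp_1 sum4 cmod_power2
  by (simp add: power2_eq_square)

lemma bp_H1: "bp x y 2^2 + bp x y 3^2 + bp x y 4^2 = bp x y 5^2 + bp x y 6^2 + bp x y 7^2"
  unfolding bp_1 bp_2 bp_3 bp_4 bp_5 bp_6 bp_7 bp_8 bp_9 bp_10 bp_11 bp_12 bp_13 bp_14 bp_15 bp_16 by algebra

lemma bp_H2_1: "bp x y 8 * bp x y 5 + bp x y 9 * bp x y 6 + bp x y 10 * bp x y 7 = bp x y 1 * bp x y 2"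
  unfolding bp_1 bp_2 bp_3 bp_4 bp_5 bp_6 bp_7 bp_8 bp_9 bp_10 bp_11 bp_12 bp_13 bp_14 bp_15 bp_16 by algebra

lemma bp_H2_2: "bp x y 11 * bp x y 5 + bp x y 12 * bp x y 6 + bp x y 13 * bp x y 7 = bp x y 1 * bp x y 3"
  unfolding bp_1 bp_2 bp_3 bp_4 bp_5 bp_6 bp_7 bp_8 bp_9 bp_10 bp_11 bp_12 bp_13 bp_14 bp_15 bp_16 by algebra

lemma bp_H2_3: "bp x y 14 * bp x y 5 + bp x y 15 * bp x y 6 + bp x y 16 * bp x y 7 = bp x y 1 * bp x y 4"
  unfolding bp_1 bp_2 bp_3 bp_4 bp_5 bp_6 bp_7 bp_8 bp_9 bp_10 bp_11 bp_12 bp_13 bp_14 bp_15 bp_16 by algebra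

lemma bp_H3_11: "bp x y 8 * bp x y 8 + bp x y 9 * bp x y 9 + bp x y 10 * bp x y 10 = (bp x y 1^2 - (bp x y 2^2 + bp x y 3^2 + bp x y 4^2)) + bp x y 2 * bp x y 2"
  unfolding bp_1 bp_2 bp_3 bp_4 bp_5 bp_6 bp_7 bp_8 bp_9 bp_10 bp_11 bp_12 bp_13 bp_14 bp_15 bp_16 by algebra

lemma bp_H3_12: "bp x y 8 * bp x y 11 + bp x y 9 * bp x y 12 + bp x y 10 * bp x y 13 = bp x y 2 * bp x y 3"
  unfolding bp_1 bp_2 bp_3 bp_4 bp_5 bp_6 bp_7 bp_8 bp_9 bp_10 bp_11 bp_12 bp_13 bp_14 bp_15 bp_16 by algebra

lemma bp_H3_13: "bp x y 8 * bp x y 14 + bp x y 9 * bp x y 15 + bp x y 10 * bp x y 16 = bp x y 2 * bp x y 4"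
  unfolding bp_1 bp_2 bp_3 bp_4 bp_5 bp_6 bp_7 bp_8 bp_9 bp_10 bp_11 bp_12 bp_13 bp_14 bp_15 bp_16 by algebra

lemma bp_H3_22: "bp x y 11 * bp x y 11 + bp x y 12 * bp x y 12 + bp x y 13 * bp x y 13 = (bp x y 1^2 - (bp x y 2^2 + bp x y 3^2 + bp x y 4^2)) + bp x y 3 * bp x y 3"
  unfolding bp_1 bp_2 bp_3 bp_4 bp_5 bp_6 bp_7 bp_8 bp_9 bp_10 bp_11 bp_12 bp_13 bp_14 bp_15 bp_16 by algebra

lemma bp_H3_23: "bp x y 11 * bp x y 14 + bp x y 12 * bp x y 15 + bp x y 13 * bp x y 16 = bp x y 3 * bp x y 4"
  unfolding bp_1 bp_2 bp_3 bp_4 bp_5 bp_6 bp_7 bp_8 bp_9 bp_10 bp_11 bp_12 bp_13 bp_14 bp_15 bp_16 by algebra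

lemma bp_H3_33: "bp x y 14 * bp x y 14 + bp x y 15 * bp x y 15 + bp x y 16 * bp x y 16 = (bp x y 1^2 - (bp x y 2^2 + bp x y 3^2 + bp x y 4^2)) + bp x y 4 * bp x y 4"
  unfolding bp_1 bp_2 bp_3 bp_4 bp_5 bp_6 bp_7 bp_8 bp_9 bp_10 bp_11 bp_12 bp_13 bp_14 bp_15 bp_16 by algebra

lemma bp_H4_1: "(bp x y 9 * bp x y 13 - bp x y 10 * bp x y 12) = bp x y 4 * bp x y 5 - bp x y 1 * bp x y 14"
  unfolding bp_1 bp_2 bp_3 bp_4 bp_5 bp_6 bp_7 bp_8 bp_9 bp_10 bp_11 bp_12 bp_13 bp_14 bp_15 bp_16 by algebra

lemma bp_H4_2: "(bp x y 10 * bp x y 11 - bp x y 8 * bp x y 13) = bp x y 4 * bp x y 6 - bp x y 1 * bp x y 15"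
  unfolding bp_1 bp_2 bp_3 bp_4 bp_5 bp_6 bp_7 bp_8 bp_9 bp_10 bp_11 bp_12 bp_13 bp_14 bp_15 bp_16 by algebra

lemma bp_H4_3: "(bp x y 8 * bp x y 12 - bp x y 9 * bp x y 11) = bp x y 4 * bp x y 7 - bp x y 1 * bp x y 16"
  unfolding bp_1 bp_2 bp_3 bp_4 bp_5 bp_6 bp_7 bp_8 bp_9 bp_10 bp_11 bp_12 bp_13 bp_14 bp_15 bp_16 by algebra

lemma bp_H5_1: "(bp x y 3^2 + bp x y 4^2) * bp x y 11 = bp x y 1 * bp x y 3 * bp x y 5 - bp x y 4 * (bp x y 6 * bp x y 10 - bp x y 7 * bp x y 9) - bp x y 2 * bp x y 3 * bp x y 8"
  unfolding bp_1 bp_2 bp_3 bp_4 bp_5 bp_6 bp_7 bp_8 bp_9 bp_10 bp_11 bp_12 bp_13 bp_14 bp_15 bp_16 by algebra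

lemma bp_H5_2: "(bp x y 3^2 + bp x y 4^2) * bp x y 12 = bp x y 1 * bp x y 3 * bp x y 6 - bp x y 4 * (bp x y 7 * bp x y 8 - bp x y 5 * bp x y 10) - bp x y 2 * bp x y 3 * bp x y 9"
  unfolding bp_1 bp_2 bp_3 bp_4 bp_5 bp_6 bp_7 bp_8 bp_9 bp_10 bp_11 bp_12 bp_13 bp_14 bp_15 bp_16 by algebra

lemma bp_H5_3: "(bp x y 3^2 + bp x y 4^2) * bp x y 13 = bp x y 1 * bp x y 3 * bp x y 7 - bp x y 4 * (bp x y 5 * bp x y 9 - bp x y 6 * bp x y 8) - bp x y 2 * bp x y 3 * bp x y 10"
  unfolding bp_1 bp_2 bp_3 bp_4 bp_5 bp_6 bp_7 bp_8 bp_9 bp_10 bp_11 bp_12 bp_13 bp_14 bp_15 bp_16 by algebra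

lemma bp_H0: "bp x y 1 ^2 - (bp x y 2^2 + bp x y 3^2 + bp x y 4^2) = 4 * ((x 0 * x 3 - y 0 * y 3 - x 1 * x 2 + y 1 * y 2)^2 + (x 0 * y 3 + y 0 * x 3 - x 1 * y 2 - y 1 * x 2)^2)"
  unfolding bp_1 bp_2 bp_3 bp_4 by algebra

lemma H1: assumes "pure_state p" shows "bloch p 2^2 + bloch p 3^2 + bloch p 4^2 = bloch p 5^2 + bloch p 6^2 + bloch p 7^2"
proof -
  have n: "bp (\<lambda>k. Re (p k)) (\<lambda>k. Im (p k)) 1 = 1" using pure_n[OF assms] unfolding bloch_1 .
  show ?thesis unfolding bloch_1 bloch_2 bloch_3 bloch_4 bloch_5 bloch_6 bloch_7 bloch_8 bloch_9 bloch_10 bloch_11 bloch_12 bloch_13 bloch_14 bloch_15 bloch_16 using bp_H1[of "\<lambda>k. Re (p k)" "\<lambda>k. Im (p k)"] unfolding n by (simp only: mult_1 mult_1_right power_one)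
qed

lemma H2_1: assumes "pure_state p" shows "bloch p 8 * bloch p 5 + bloch p 9 * bloch p 6 + bloch p 10 * bloch p 7 = bloch p 2"
proof -
  have n: "bp (\<lambda>k. Re (p k)) (\<lambda>k. Im (p k)) 1 = 1" using pure_n[OF assms] unfolding bloch_1 .
  show ?thesis unfolding bloch_1 bloch_2 bloch_3 bloch_4 bloch_5 bloch_6 bloch_7 bloch_8 bloch_9 bloch_10 bloch_11 bloch_12 bloch_13 bloch_14 bloch_15 bloch_16 using bp_H2_1[of "\<lambda>k. Re (p k)" "\<lambda>k. Im (p k)"] unfolding n by (simp only: mult_1 mult_1_right power_one)
qed

lemma H2_2: assumes "pure_state p" shows "bloch p 11 * bloch p 5 + bloch p 12 * bloch p 6 + bloch p 13 * bloch p 7 = bloch p 3"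
proof -
  have n: "bp (\<lambda>k. Re (p k)) (\<lambda>k. Im (p k)) 1 = 1" using pure_n[OF assms] unfolding bloch_1 .
  show ?thesis unfolding bloch_1 bloch_2 bloch_3 bloch_4 bloch_5 bloch_6 bloch_7 bloch_8 bloch_9 bloch_10 bloch_11 bloch_12 bloch_13 bloch_14 bloch_15 bloch_16 using bp_H2_2[of "\<lambda>k. Re (p k)" "\<lambda>k. Im (p k)"] unfolding n by (simp only: mult_1 mult_1_right power_one)
qed

lemma H2_3: assumes "pure_state p" shows "bloch p 14 * bloch p 5 + bloch p 15 * bloch p 6 + bloch p 16 * bloch p 7 = bloch p 4"
proof -
  have n: "bp (\<lambda>k. Re (p k)) (\<lambda>k. Im (p k)) 1 = 1" using pure_n[OF assms] unfolding bloch_1 .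
  show ?thesis unfolding bloch_1 bloch_2 bloch_3 bloch_4 bloch_5 bloch_6 bloch_7 bloch_8 bloch_9 bloch_10 bloch_11 bloch_12 bloch_13 bloch_14 bloch_15 bloch_16 using bp_H2_3[of "\<lambda>k. Re (p k)" "\<lambda>k. Im (p k)"] unfolding n by (simp only: mult_1 mult_1_right power_one)
qed

lemma H3_11: assumes "pure_state p" shows "bloch p 8 * bloch p 8 + bloch p 9 * bloch p 9 + bloch p 10 * bloch p 10 = (1 - (bloch p 2^2 + bloch p 3^2 + bloch p 4^2)) + bloch p 2 * bloch p 2"
proof -
  have n: "bp (\<lambda>k. Re (p k)) (\<lambda>k. Im (p k)) 1 = 1" using pure_n[OF assms] unfolding bloch_1 .
  show ?thesis unfolding bloch_1 bloch_2 bloch_3 bloch_4 bloch_5 bloch_6 bloch_7 bloch_8 bloch_9 bloch_10 bloch_11 bloch_12 bloch_13 bloch_14 bloch_15 bloch_16 using bp_H3_11[of "\<lambda>k. Re (p k)" "\<lambda>k. Im (p k)"] unfolding n by (simp only: mult_1 mult_1_right power_one)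
qed

lemma H3_12: assumes "pure_state p" shows "bloch p 8 * bloch p 11 + bloch p 9 * bloch p 12 + bloch p 10 * bloch p 13 = bloch p 2 * bloch p 3"
proof -
  have n: "bp (\<lambda>k. Re (p k)) (\<lambda>k. Im (p k)) 1 = 1" using pure_n[OF assms] unfolding bloch_1 .
  show ?thesis unfolding bloch_1 bloch_2 bloch_3 bloch_4 bloch_5 bloch_6 bloch_7 bloch_8 bloch_9 bloch_10 bloch_11 bloch_12 bloch_13 bloch_14 bloch_15 bloch_16 using bp_H3_12[of "\<lambda>k. Re (p k)" "\<lambda>k. Im (p k)"] unfolding n by (simp only: mult_1 mult_1_right power_one)
qed

lemma H3_13: assumes "pure_state p" shows "bloch p 8 * bloch p 14 + bloch p 9 * bloch p 15 + bloch p 10 * bloch p 16 = bloch p 2 * bloch p 4"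
proof -
  have n: "bp (\<lambda>k. Re (p k)) (\<lambda>k. Im (p k)) 1 = 1" using pure_n[OF assms] unfolding bloch_1 .
  show ?thesis unfolding bloch_1 bloch_2 bloch_3 bloch_4 bloch_5 bloch_6 bloch_7 bloch_8 bloch_9 bloch_10 bloch_11 bloch_12 bloch_13 bloch_14 bloch_15 bloch_16 using bp_H3_13[of "\<lambda>k. Re (p k)" "\<lambda>k. Im (p k)"] unfolding n by (simp only: mult_1 mult_1_right power_one)
qed

lemma H3_22: assumes "pure_state p" shows "bloch p 11 * bloch p 11 + bloch p 12 * bloch p 12 + bloch p 13 * bloch p 13 = (1 - (bloch p 2^2 + bloch p 3^2 + bloch p 4^2)) + bloch p 3 * bloch p 3"
proof -
  have n: "bp (\<lambda>k. Re (p k)) (\<lambda>k. Im (p k)) 1 = 1" using pure_n[OF assms] unfolding bloch_1 .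
  show ?thesis unfolding bloch_1 bloch_2 bloch_3 bloch_4 bloch_5 bloch_6 bloch_7 bloch_8 bloch_9 bloch_10 bloch_11 bloch_12 bloch_13 bloch_14 bloch_15 bloch_16 using bp_H3_22[of "\<lambda>k. Re (p k)" "\<lambda>k. Im (p k)"] unfolding n by (simp only: mult_1 mult_1_right power_one)
qed

lemma H3_23: assumes "pure_state p" shows "bloch p 11 * bloch p 14 + bloch p 12 * bloch p 15 + bloch p 13 * bloch p 16 = bloch p 3 * bloch p 4"
proof -
  have n: "bp (\<lambda>k. Re (p k)) (\<lambda>k. Im (p k)) 1 = 1" using pure_n[OF assms] unfolding bloch_1 .
  show ?thesis unfolding bloch_1 bloch_2 bloch_3 bloch_4 bloch_5 bloch_6 bloch_7 bloch_8 bloch_9 bloch_10 bloch_11 bloch_12 bloch_13 bloch_14 bloch_15 bloch_16 using bp_H3_23[of "\<lambda>k. Re (p k)" "\<lambda>k. Im (p k)"] unfolding n by (simp only: mult_1 mult_1_right power_one)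
qed

lemma H3_33: assumes "pure_state p" shows "bloch p 14 * bloch p 14 + bloch p 15 * bloch p 15 + bloch p 16 * bloch p 16 = (1 - (bloch p 2^2 + bloch p 3^2 + bloch p 4^2)) + bloch p 4 * bloch p 4"
proof -
  have n: "bp (\<lambda>k. Re (p k)) (\<lambda>k. Im (p k)) 1 = 1" using pure_n[OF assms] unfolding bloch_1 .
  show ?thesis unfolding bloch_1 bloch_2 bloch_3 bloch_4 bloch_5 bloch_6 bloch_7 bloch_8 bloch_9 bloch_10 bloch_11 bloch_12 bloch_13 bloch_14 bloch_15 bloch_16 using bp_H3_33[of "\<lambda>k. Re (p k)" "\<lambda>k. Im (p k)"] unfolding n by (simp only: mult_1 mult_1_right power_one)
qed

lemma H4_1: assumes "pure_state p" shows "(bloch p 9 * bloch p 13 - bloch p 10 * bloch p 12) = bloch p 4 * bloch p 5 - bloch p 14"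
proof -
  have n: "bp (\<lambda>k. Re (p k)) (\<lambda>k. Im (p k)) 1 = 1" using pure_n[OF assms] unfolding bloch_1 .
  show ?thesis unfolding bloch_1 bloch_2 bloch_3 bloch_4 bloch_5 bloch_6 bloch_7 bloch_8 bloch_9 bloch_10 bloch_11 bloch_12 bloch_13 bloch_14 bloch_15 bloch_16 using bp_H4_1[of "\<lambda>k. Re (p k)" "\<lambda>k. Im (p k)"] unfolding n by (simp only: mult_1 mult_1_right power_one)
qed

lemma H4_2: assumes "pure_state p" shows "(bloch p 10 * bloch p 11 - bloch p 8 * bloch p 13) = bloch p 4 * bloch p 6 - bloch p 15"
proof -
  have n: "bp (\<lambda>k. Re (p k)) (\<lambda>k. Im (p k)) 1 = 1" using pure_n[OF assms] unfolding bloch_1 .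
  show ?thesis unfolding bloch_1 bloch_2 bloch_3 bloch_4 bloch_5 bloch_6 bloch_7 bloch_8 bloch_9 bloch_10 bloch_11 bloch_12 bloch_13 bloch_14 bloch_15 bloch_16 using bp_H4_2[of "\<lambda>k. Re (p k)" "\<lambda>k. Im (p k)"] unfolding n by (simp only: mult_1 mult_1_right power_one)
qed

lemma H4_3: assumes "pure_state p" shows "(bloch p 8 * bloch p 12 - bloch p 9 * bloch p 11) = bloch p 4 * bloch p 7 - bloch p 16"
proof -
  have n: "bp (\<lambda>k. Re (p k)) (\<lambda>k. Im (p k)) 1 = 1" using pure_n[OF assms] unfolding bloch_1 .
  show ?thesis unfolding bloch_1 bloch_2 bloch_3 bloch_4 bloch_5 bloch_6 bloch_7 bloch_8 bloch_9 bloch_10 bloch_11 bloch_12 bloch_13 bloch_14 bloch_15 bloch_16 using bp_H4_3[of "\<lambda>k. Re (p k)" "\<lambda>k. Im (p k)"] unfolding n by (simp only: mult_1 mult_1_right power_one)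
qed

lemma H5_1: assumes "pure_state p" shows "(bloch p 3^2 + bloch p 4^2) * bloch p 11 = bloch p 3 * bloch p 5 - bloch p 4 * (bloch p 6 * bloch p 10 - bloch p 7 * bloch p 9) - bloch p 2 * bloch p 3 * bloch p 8"
proof -
  have n: "bp (\<lambda>k. Re (p k)) (\<lambda>k. Im (p k)) 1 = 1" using pure_n[OF assms] unfolding bloch_1 .
  show ?thesis unfolding bloch_1 bloch_2 bloch_3 bloch_4 bloch_5 bloch_6 bloch_7 bloch_8 bloch_9 bloch_10 bloch_11 bloch_12 bloch_13 bloch_14 bloch_15 bloch_16 using bp_H5_1[of "\<lambda>k. Re (p k)" "\<lambda>k. Im (p k)"] unfolding n by (simp only: mult_1 mult_1_right power_one)
qed

lemma H5_2: assumes "pure_state p" shows "(bloch p 3^2 + bloch p 4^2) * bloch p 12 = bloch p 3 * bloch p 6 - bloch p 4 * (bloch p 7 * bloch p 8 - bloch p 5 * bloch p 10) - bloch p 2 * bloch p 3 * bloch p 9"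
proof -
  have n: "bp (\<lambda>k. Re (p k)) (\<lambda>k. Im (p k)) 1 = 1" using pure_n[OF assms] unfolding bloch_1 .
  show ?thesis unfolding bloch_1 bloch_2 bloch_3 bloch_4 bloch_5 bloch_6 bloch_7 bloch_8 bloch_9 bloch_10 bloch_11 bloch_12 bloch_13 bloch_14 bloch_15 bloch_16 using bp_H5_2[of "\<lambda>k. Re (p k)" "\<lambda>k. Im (p k)"] unfolding n by (simp only: mult_1 mult_1_right power_one)
qed

lemma H5_3: assumes "pure_state p" shows "(bloch p 3^2 + bloch p 4^2) * bloch p 13 = bloch p 3 * bloch p 7 - bloch p 4 * (bloch p 5 * bloch p 9 - bloch p 6 * bloch p 8) - bloch p 2 * bloch p 3 * bloch p 10"
proof -
  have n: "bp (\<lambda>k. Re (p k)) (\<lambda>k. Im (p k)) 1 = 1" using pure_n[OF assms] unfolding bloch_1 .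
  show ?thesis unfolding bloch_1 bloch_2 bloch_3 bloch_4 bloch_5 bloch_6 bloch_7 bloch_8 bloch_9 bloch_10 bloch_11 bloch_12 bloch_13 bloch_14 bloch_15 bloch_16 using bp_H5_3[of "\<lambda>k. Re (p k)" "\<lambda>k. Im (p k)"] unfolding n by (simp only: mult_1 mult_1_right power_one)
qed

lemma bp_H0': "bp x y 2^2 + bp x y 3^2 + bp x y 4^2 \<le> bp x y 1^2"
proof -
  have "0 \<le> 4 * ((x 0 * x 3 - y 0 * y 3 - x 1 * x 2 + y 1 * y 2)^2 + (x 0 * y 3 + y 0 * x 3 - x 1 * y 2 - y 1 * x 2)^2)" by simp
  then show ?thesis using bp_H0[of x y] by linarith
qed

lemma H0: assumes "pure_state p" shows "bloch p 2^2 + bloch p 3^2 + bloch p 4^2 \<le> 1"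
proof -
  have n: "bp (\<lambda>k. Re (p k)) (\<lambda>k. Im (p k)) 1 = 1" using pure_n[OF assms] unfolding bloch_1 .
  show ?thesis unfolding bloch_2 bloch_3 bloch_4 using bp_H0'[of "\<lambda>k. Re (p k)" "\<lambda>k. Im (p k)"] unfolding n by simp
qed

lemma D_same: "D_chi2 b b = 0"
proof (cases "b = 1 \<or> b = -1")
  case True then show ?thesis by (auto simp: D_chi2_def)
next
  case False
  then have "b + 1 \<noteq> 0" "1 - b \<noteq> 0" by auto
  moreover have "b * b \<noteq> 1"
  proof
    assume "b * b = 1" then have "(b - 1) * (b + 1) = 0" by (simp add: algebra_simps)
    then show False using False by auto
  qed
  ultimately show ?thesis using False unfolding D_chi2_def by (simp add: field_simps power2_eq_square)
qed

lemma D_zero: "D_chi2 b 0 = b\<^sup>2"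
  unfolding D_chi2_def by (simp add: field_simps power2_eq_square)

lemma D_formula: assumes "-1 < h" "h < 1" shows "D_chi2 b h = (b - h)\<^sup>2 / (1 - h\<^sup>2)"
proof -
  have "h + 1 \<noteq> 0" "1 - h \<noteq> 0" using assms by auto
  have hh: "h * h \<noteq> 1"
  proof
    assume "h * h = 1" then have "(h - 1) * (h + 1) = 0" by (simp add: algebra_simps)
    then show False using assms by auto
  qed
  have "1 - h\<^sup>2 = (1 + h) * (1 - h)" by (simp add: power2_eq_square algebra_simps)
  then show ?thesis using assms hh \<open>h + 1 \<noteq> 0\<close> \<open>1 - h \<noteq> 0\<close> unfolding D_chi2_def
    by (simp add: field_simps power2_eq_square)
qed

lemma S_sym:
  fixes S :: "real set"
  assumes "b \<in> S" "bdd_above S" "bdd_below S" "\<forall>x\<in>S. -x \<in> S"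
  shows "(Sup S + Inf S) / 2 = 0"
proof -
  have ne: "S \<noteq> {}" using assms by auto
  have "Inf S \<ge> - Sup S"
  proof (rule cInf_greatest[OF ne])
    fix x assume "x \<in> S" then have "-x \<in> S" using assms by auto
    then have "-x \<le> Sup S" using cSup_upper assms by blast
    then show "- Sup S \<le> x" by linarith
  qed
  moreover have "Sup S \<le> - Inf S"
  proof (rule cSup_least[OF ne])
    fix x assume "x \<in> S" then have "-x \<in> S" using assms by auto
    then have "Inf S \<le> -x" using cInf_lower assms by blast
    then show "x \<le> - Inf S" by linarith
  qed
  ultimately have "Sup S + Inf S = 0" by linarith
  then show ?thesis by simp
qed

lemma S_single:
  fixes S :: "real set"
  assumes "b \<in> S" "S \<subseteq> {b}"
  shows "D_chi2 b ((Sup S + Inf S) / 2) = 0"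
proof -
  have "S = {b}" using assms by auto
  then show ?thesis by (simp add: D_same)
qed

lemma S_two:
  fixes S :: "real set"
  assumes "b \<in> S" "S \<subseteq> {b, -b}"
  shows "D_chi2 b ((Sup S + Inf S) / 2) \<le> b\<^sup>2"
    and "-b \<in> S \<Longrightarrow> D_chi2 b ((Sup S + Inf S) / 2) = b\<^sup>2"
proof -
  show eq: "D_chi2 b ((Sup S + Inf S) / 2) = b\<^sup>2" if "-b \<in> S"
  proof -
    have fin: "finite S" using assms finite_subset by blast
    have "(Sup S + Inf S) / 2 = 0"
      by (rule S_sym[OF assms(1)]) (use fin assms that in \<open>auto simp: bdd_above_finite bdd_below_finite\<close>)
    then show ?thesis by (simp add: D_zero)
  qed
  show "D_chi2 b ((Sup S + Inf S) / 2) \<le> b\<^sup>2"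
  proof (cases "-b \<in> S")
    case True then show ?thesis using eq by simp
  next
    case False
    then have "S \<subseteq> {b}" using assms by auto
    then show ?thesis using S_single[OF assms(1)] by simp
  qed
qed

lemma key_ineq:
  fixes x y a s \<rho> :: real
  assumes "a - s*\<rho> \<le> y" "y \<le> x" "x \<le> a + s*\<rho>" "\<bar>a\<bar> + \<rho> \<le> 1" "0 \<le> s" "s \<le> 1" "0 \<le> \<rho>"
  shows "((x - y)/2)\<^sup>2 \<le> s\<^sup>2 * (1 - ((x + y)/2)\<^sup>2)"
proof -
  define t where "t = (x - y)/2"
  define m where "m = (x + y)/2"
  have t0: "0 \<le> t" "t \<le> s*\<rho>" using assms unfolding t_def by auto
  have sr: "s * \<rho> \<le> \<rho>" using assms by (simp add: mult_left_le_one_le)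
  have "m - a + t = x - a" "a - m + t = a - y" unfolding t_def m_def by (simp_all add: field_simps)
  then have "m - a + t \<le> s*\<rho>" "a - m + t \<le> s*\<rho>" using assms by auto
  then have "\<bar>m - a\<bar> \<le> s*\<rho> - t" by linarith
  then have mb: "\<bar>m\<bar> \<le> \<bar>a\<bar> + s*\<rho> - t" by linarith
  define k where "k = 1 - \<rho> + s*\<rho> - t"
  have k0: "0 \<le> k" using t0 assms unfolding k_def by linarith
  have mk: "\<bar>m\<bar> \<le> k" using mb assms unfolding k_def by linarith
  have "m\<^sup>2 \<le> k\<^sup>2" using mk k0 by (metis abs_le_square_iff abs_of_nonneg)
  then have 1: "s\<^sup>2 * m\<^sup>2 \<le> s\<^sup>2 * k\<^sup>2" by (simp add: mult_left_mono)
  have 2: "t\<^sup>2 + s\<^sup>2 * k\<^sup>2 \<le> s\<^sup>2"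
  proof -
    define K where "K = 1 - \<rho> + s*\<rho>"
    define c where "c = 2*s\<^sup>2*K - (1+s\<^sup>2)*s*\<rho>"
    have kK: "k = K - t" unfolding k_def K_def by simp
    have r1: "\<rho> \<le> 1" using assms by linarith
    have K0: "0 \<le> K" "K \<le> 1" unfolding K_def using sr r1 assms by (auto simp: algebra_simps)
    have "K * K \<le> 1 * 1" using K0 by (intro mult_mono) auto
    then have K2: "0 \<le> 1 - K\<^sup>2" by (simp add: power2_eq_square)
    have e: "s\<^sup>2 - (t\<^sup>2 + s\<^sup>2*k\<^sup>2) = s\<^sup>2*(1-K\<^sup>2) + t*c + (1+s\<^sup>2)*t*(s*\<rho> - t)"
      unfolding kK c_def by (simp add: power2_eq_square algebra_simps)
    have p1: "0 \<le> (1+s\<^sup>2)*t*(s*\<rho> - t)" using t0 by simp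
    have p2: "0 \<le> s\<^sup>2*(1-K\<^sup>2)" using K2 by simp
    have p3: "0 \<le> s\<^sup>2*(1-K\<^sup>2) + t*c"
    proof (cases "0 \<le> c")
      case True then show ?thesis using p2 t0 by simp
    next
      case False
      then have "s*\<rho>*c \<le> t*c" using t0 by (intro mult_right_mono_neg) auto
      moreover have "s\<^sup>2*(1-K\<^sup>2) + s*\<rho>*c = 2*s\<^sup>2*\<rho>*(1-\<rho>)"
        unfolding c_def K_def by (simp add: power2_eq_square algebra_simps)
      moreover have "0 \<le> 2*s\<^sup>2*\<rho>*(1-\<rho>)" using r1 assms by simp
      ultimately show ?thesis by linarith
    qed
    show ?thesis using e p1 p3 by linarith
  qed
  show ?thesis using 1 2 unfolding t_def[symmetric] m_def[symmetric] by (simp add: algebra_simps)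
qed

lemma S_A:
  fixes S :: "real set"
  assumes "b \<in> S" "S \<subseteq> {a - s*\<rho> .. a + s*\<rho>}" "\<bar>a\<bar> + \<rho> \<le> 1" "0 \<le> s" "s \<le> 1" "0 \<le> \<rho>"
  shows "D_chi2 b ((Sup S + Inf S) / 2) \<le> s\<^sup>2"
proof -
  have ne: "S \<noteq> {}" using assms by auto
  have ba: "bdd_above S" using assms(2) by (meson bdd_above_Icc bdd_above_mono)
  have bb: "bdd_below S" using assms(2) by (meson bdd_below_Icc bdd_below_mono)
  define M where "M = Sup S"
  define m where "m = Inf S"
  have bM: "b \<le> M" unfolding M_def using cSup_upper[OF assms(1) ba] .
  have bm: "m \<le> b" unfolding m_def using cInf_lower[OF assms(1) bb] .
  have Mu: "M \<le> a + s*\<rho>" unfolding M_def using assms(2) by (intro cSup_least[OF ne]) auto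
  have ml: "a - s*\<rho> \<le> m" unfolding m_def using assms(2) by (intro cInf_greatest[OF ne]) auto
  define h where "h = (M + m) / 2"
  have sr: "s * \<rho> \<le> \<rho>" using assms by (simp add: mult_left_le_one_le)
  show ?thesis
  proof (cases "h = 1 \<or> h = -1")
    case True
    then show ?thesis unfolding M_def[symmetric] m_def[symmetric] h_def[symmetric] D_chi2_def by auto
  next
    case False
    have aa: "a \<le> \<bar>a\<bar>" "- \<bar>a\<bar> \<le> a" by auto
    have "-1 \<le> h" using aa Mu ml bM bm sr assms(3) unfolding h_def by argo
    moreover have "h \<le> 1" using aa Mu ml bM bm sr assms(3) unfolding h_def by argo
    ultimately have hb: "-1 < h" "h < 1" using False by auto
    have ki: "((M - m)/2)\<^sup>2 \<le> s\<^sup>2 * (1 - h\<^sup>2)" unfolding h_def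
      using key_ineq[of a s \<rho> m M] ml bM bm Mu assms by auto
    have "b - h \<le> (M - m)/2" "h - b \<le> (M - m)/2" using bM bm unfolding h_def by argo+
    then have "\<bar>b - h\<bar> \<le> (M - m)/2" unfolding abs_le_iff by argo
    then have "(b - h)\<^sup>2 \<le> ((M - m)/2)\<^sup>2" by (metis abs_le_square_iff abs_of_nonneg abs_ge_zero order_trans power2_abs)
    then have le: "(b - h)\<^sup>2 \<le> s\<^sup>2 * (1 - h\<^sup>2)" using ki by linarith
    have pos: "0 < 1 - h\<^sup>2" using hb by (simp add: abs_less_iff abs_square_less_1)
    have "D_chi2 b h = (b - h)\<^sup>2 / (1 - h\<^sup>2)" using D_formula hb by blast
    also have "\<dots> \<le> s\<^sup>2" using le pos by (simp add: pos_divide_le_eq)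
    finally show ?thesis unfolding h_def M_def m_def .
  qed
qed

lemma row_bound:
  fixes c1 c2 c3 b1 b2 b3 A r :: real
  assumes "b1\<^sup>2 + b2\<^sup>2 + b3\<^sup>2 = r" "c1*b1 + c2*b2 + c3*b3 = A" "c1*c1 + c2*c2 + c3*c3 = 1 - r + A*A" "0 < r"
  shows "(r*c1 - A*b1)\<^sup>2 \<le> (1 - r)*(r - A\<^sup>2)*(r - b1\<^sup>2)"
proof -
  define u1 where "u1 = r*c1 - A*b1"
  define u2 where "u2 = r*c2 - A*b2"
  define u3 where "u3 = r*c3 - A*b3"
  have "u1*b1 + u2*b2 + u3*b3 = r*(c1*b1 + c2*b2 + c3*b3) - A*(b1\<^sup>2 + b2\<^sup>2 + b3\<^sup>2)"
    unfolding u1_def u2_def u3_def by (simp add: algebra_simps power2_eq_square)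
  then have ub: "u1*b1 + u2*b2 + u3*b3 = 0" using assms(1,2) by simp
  have "u1\<^sup>2 + u2\<^sup>2 + u3\<^sup>2 = r\<^sup>2*(c1*c1 + c2*c2 + c3*c3) - 2*r*A*(c1*b1 + c2*b2 + c3*b3) + A\<^sup>2*(b1\<^sup>2 + b2\<^sup>2 + b3\<^sup>2)"
    unfolding u1_def u2_def u3_def by (simp add: algebra_simps power2_eq_square)
  also have "\<dots> = r\<^sup>2*(1 - r + A*A) - 2*r*A*A + A\<^sup>2*r" using assms(1,2,3) by simp
  also have "\<dots> = r*(1-r)*(r - A\<^sup>2)" by (simp add: algebra_simps power2_eq_square)
  finally have un: "u1\<^sup>2 + u2\<^sup>2 + u3\<^sup>2 = r*(1-r)*(r - A\<^sup>2)" .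
  have u1b: "u1*b1 = -(u2*b2 + u3*b3)" using ub by simp
  have "r*u1\<^sup>2 + (u2*b3 - u3*b2)\<^sup>2 - (u1\<^sup>2 + u2\<^sup>2 + u3\<^sup>2)*(r - b1\<^sup>2) = (u1*b1)\<^sup>2 - (u2*b2 + u3*b3)\<^sup>2"
    unfolding assms(1)[symmetric] by (simp add: algebra_simps power2_eq_square)
  also have "\<dots> = 0" unfolding u1b by (simp add: power2_eq_square algebra_simps)
  finally have key: "r*u1\<^sup>2 + (u2*b3 - u3*b2)\<^sup>2 = (u1\<^sup>2 + u2\<^sup>2 + u3\<^sup>2)*(r - b1\<^sup>2)" by simp
  have "r*u1\<^sup>2 \<le> (u1\<^sup>2 + u2\<^sup>2 + u3\<^sup>2)*(r - b1\<^sup>2)" using key by (smt (verit) zero_le_power2)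
  also have "\<dots> = r * ((1-r)*(r - A\<^sup>2)*(r - b1\<^sup>2))" unfolding un by simp
  finally have "u1\<^sup>2 \<le> (1-r)*(r - A\<^sup>2)*(r - b1\<^sup>2)" using assms(4) by simp
  then show ?thesis unfolding u1_def .
qed
lemma interval_conv:
  fixes r A B c :: real
  assumes "0 < r" "r \<le> 1" "A\<^sup>2 \<le> r" "B\<^sup>2 \<le> r" "(r*c - A*B)\<^sup>2 \<le> (1-r)*(r-A\<^sup>2)*(r-B\<^sup>2)"
  shows "A*B/r - sqrt (1-r) * sqrt ((1 - A\<^sup>2/r)*(1 - B\<^sup>2/r)) \<le> c \<and> c \<le> A*B/r + sqrt (1-r) * sqrt ((1 - A\<^sup>2/r)*(1 - B\<^sup>2/r))"
proof -
  have e: "(c - A*B/r)\<^sup>2 = (r*c - A*B)\<^sup>2 / r\<^sup>2" using assms(1) by (simp add: field_simps power2_eq_square)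
  have e2: "(1-r)*(r-A\<^sup>2)*(r-B\<^sup>2) / r\<^sup>2 = (1-r)*((1 - A\<^sup>2/r)*(1 - B\<^sup>2/r))" using assms(1) by (simp add: field_simps power2_eq_square)
  have "(c - A*B/r)\<^sup>2 \<le> (1-r)*((1 - A\<^sup>2/r)*(1 - B\<^sup>2/r))" unfolding e e2[symmetric]
    using assms(1,5) by (simp add: divide_right_mono)
  then have "\<bar>c - A*B/r\<bar> \<le> sqrt ((1-r)*((1 - A\<^sup>2/r)*(1 - B\<^sup>2/r)))"
    by (metis power2_abs real_le_rsqrt)
  then show "A*B/r - sqrt (1-r) * sqrt ((1 - A\<^sup>2/r)*(1 - B\<^sup>2/r)) \<le> c \<and> c \<le> A*B/r + sqrt (1-r) * sqrt ((1 - A\<^sup>2/r)*(1 - B\<^sup>2/r))"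
    by (simp add: real_sqrt_mult abs_le_iff; argo)
qed



lemma interval_conv2:
  fixes r A B :: real
  assumes "0 < r" "r \<le> 1" "A\<^sup>2 \<le> r" "B\<^sup>2 \<le> r"
  shows "\<bar>A*B/r\<bar> + sqrt ((1 - A\<^sup>2/r)*(1 - B\<^sup>2/r)) \<le> 1"
proof -
  define X where "X = A\<^sup>2/r"
  define Y where "Y = B\<^sup>2/r"
  have X01: "0 \<le> X" "X \<le> 1" unfolding X_def using assms by auto
  have Y01: "0 \<le> Y" "Y \<le> 1" unfolding Y_def using assms by auto
  define x1 where "x1 = sqrt X"
  define x2 where "x2 = sqrt (1 - X)"
  define y1 where "y1 = sqrt Y"
  define y2 where "y2 = sqrt (1 - Y)"
  have "x1\<^sup>2 = X" "x2\<^sup>2 = 1 - X" "y1\<^sup>2 = Y" "y2\<^sup>2 = 1 - Y"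
    unfolding x1_def x2_def y1_def y2_def using X01 Y01 by simp_all
  then have sq: "x1\<^sup>2 + x2\<^sup>2 = 1" "y1\<^sup>2 + y2\<^sup>2 = 1" by simp_all
  have nn: "0 \<le> x1" "0 \<le> x2" "0 \<le> y1" "0 \<le> y2" unfolding x1_def x2_def y1_def y2_def using X01 Y01 by auto
  have "(x1*y1 + x2*y2)\<^sup>2 + (x1*y2 - x2*y1)\<^sup>2 = (x1\<^sup>2 + x2\<^sup>2)*(y1\<^sup>2 + y2\<^sup>2)" by (simp add: algebra_simps power2_eq_square)
  then have "(x1*y1 + x2*y2)\<^sup>2 + (x1*y2 - x2*y1)\<^sup>2 = 1" unfolding sq by simp
  then have "(x1*y1 + x2*y2)\<^sup>2 \<le> 1" using zero_le_power2[of "x1*y2 - x2*y1"] by linarith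
  then have "(x1*y1 + x2*y2)\<^sup>2 \<le> 1\<^sup>2" by simp
  then have cs: "x1*y1 + x2*y2 \<le> 1" by (rule power2_le_imp_le) simp
  have "x1 * y1 = sqrt (A\<^sup>2/r * (B\<^sup>2/r))" unfolding x1_def y1_def X_def Y_def by (rule real_sqrt_mult[symmetric])
  also have "A\<^sup>2/r * (B\<^sup>2/r) = (A*B/r)\<^sup>2" by (simp add: power2_eq_square)
  also have "sqrt ((A*B/r)\<^sup>2) = \<bar>A*B/r\<bar>" by (rule real_sqrt_abs)
  finally have "\<bar>A*B/r\<bar> = x1 * y1" by simp
  moreover have "sqrt ((1 - A\<^sup>2/r)*(1 - B\<^sup>2/r)) = x2 * y2" unfolding x2_def y2_def X_def Y_def by (simp add: real_sqrt_mult)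
  ultimately show "\<bar>A*B/r\<bar> + sqrt ((1 - A\<^sup>2/r)*(1 - B\<^sup>2/r)) \<le> 1" using cs by simp
qed

lemma sq_le1: fixes x :: real assumes "x\<^sup>2 \<le> 1" shows "\<bar>x\<bar> \<le> 1"
proof -
  have "\<bar>x\<bar>\<^sup>2 \<le> 1\<^sup>2" using assms by simp
  then show ?thesis by (rule power2_le_imp_le) simp
qed


lemma rowU:
  fixes c1 c2 c3 b1 b2 b3 A r :: real
  assumes "b1\<^sup>2 + b2\<^sup>2 + b3\<^sup>2 = r" "c1*b1 + c2*b2 + c3*b3 = A" "c1*c1 + c2*c2 + c3*c3 = 1 - r + A*A"
  shows "(r*c1 - A*b1)\<^sup>2 + (r*c2 - A*b2)\<^sup>2 + (r*c3 - A*b3)\<^sup>2 = r*(1-r)*(r - A\<^sup>2)"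
proof -
  have "(r*c1 - A*b1)\<^sup>2 + (r*c2 - A*b2)\<^sup>2 + (r*c3 - A*b3)\<^sup>2 = r\<^sup>2*(c1*c1 + c2*c2 + c3*c3) - 2*r*A*(c1*b1 + c2*b2 + c3*b3) + A\<^sup>2*(b1\<^sup>2 + b2\<^sup>2 + b3\<^sup>2)"
    by (simp add: algebra_simps power2_eq_square)
  also have "\<dots> = r\<^sup>2*(1 - r + A*A) - 2*r*A*A + A\<^sup>2*r" using assms by simp
  also have "\<dots> = r*(1-r)*(r - A\<^sup>2)" by (simp add: algebra_simps power2_eq_square)
  finally show ?thesis .
qed

lemma rowU0:
  fixes c1 c2 c3 b1 b2 b3 A r :: real
  assumes "b1\<^sup>2 + b2\<^sup>2 + b3\<^sup>2 = r" "c1*b1 + c2*b2 + c3*b3 = A" "c1*c1 + c2*c2 + c3*c3 = 1 - r + A*A"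
    "r*(1-r)*(r - A\<^sup>2) = 0"
  shows "r*c1 = A*b1" "r*c2 = A*b2" "r*c3 = A*b3"
proof -
  have e: "(r*c1 - A*b1)\<^sup>2 + (r*c2 - A*b2)\<^sup>2 + (r*c3 - A*b3)\<^sup>2 = 0" using rowU[OF assms(1-3)] assms(4) by simp
  have z: "0 \<le> (r*c1 - A*b1)\<^sup>2" "0 \<le> (r*c2 - A*b2)\<^sup>2" "0 \<le> (r*c3 - A*b3)\<^sup>2" by simp_all
  have "(r*c1 - A*b1)\<^sup>2 = 0" "(r*c2 - A*b2)\<^sup>2 = 0" "(r*c3 - A*b3)\<^sup>2 = 0" using e z by linarith+
  then show "r*c1 = A*b1" "r*c2 = A*b2" "r*c3 = A*b3" by simp_all
qed

lemma row_bound3: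
  fixes c1 c2 c3 b1 b2 b3 A r :: real
  assumes "b1\<^sup>2 + b2\<^sup>2 + b3\<^sup>2 = r" "c1*b1 + c2*b2 + c3*b3 = A" "c1*c1 + c2*c2 + c3*c3 = 1 - r + A*A" "0 < r"
  shows "(r*c1 - A*b1)\<^sup>2 \<le> (1 - r)*(r - A\<^sup>2)*(r - b1\<^sup>2)"
    "(r*c2 - A*b2)\<^sup>2 \<le> (1 - r)*(r - A\<^sup>2)*(r - b2\<^sup>2)"
    "(r*c3 - A*b3)\<^sup>2 \<le> (1 - r)*(r - A\<^sup>2)*(r - b3\<^sup>2)"
proof -
  show "(r*c1 - A*b1)\<^sup>2 \<le> (1 - r)*(r - A\<^sup>2)*(r - b1\<^sup>2)" by (rule row_bound[OF assms])
  show "(r*c2 - A*b2)\<^sup>2 \<le> (1 - r)*(r - A\<^sup>2)*(r - b2\<^sup>2)"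
    by (rule row_bound[of b2 b3 b1 r c2 c3 c1 A]) (use assms in linarith)+
  show "(r*c3 - A*b3)\<^sup>2 \<le> (1 - r)*(r - A\<^sup>2)*(r - b3\<^sup>2)"
    by (rule row_bound[of b3 b1 b2 r c3 c1 c2 A]) (use assms in linarith)+
qed

definition agree :: "nat \<Rightarrow> (nat \<Rightarrow> complex) \<Rightarrow> (nat \<Rightarrow> complex) \<Rightarrow> bool" where
  "agree i p q \<longleftrightarrow> (\<forall>j\<in>{1..<i}. bloch p j = bloch q j)"

lemma agree_2: "agree 2 p q \<longleftrightarrow> bloch p 1 = bloch q 1"
proof -
  have "{1..<2::nat} = {1}" by (auto simp: numeral_eq_Suc less_Suc_eq)
  then show ?thesis unfolding agree_def by auto
qed

lemma agree_3: "agree 3 p q \<longleftrightarrow> bloch p 1 = bloch q 1 \<and> bloch p 2 = bloch q 2"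
proof -
  have "{1..<3::nat} = {1,2}" by (auto simp: numeral_eq_Suc less_Suc_eq)
  then show ?thesis unfolding agree_def by auto
qed

lemma agree_4: "agree 4 p q \<longleftrightarrow> bloch p 1 = bloch q 1 \<and> bloch p 2 = bloch q 2 \<and> bloch p 3 = bloch q 3"
proof -
  have "{1..<4::nat} = {1,2,3}" by (auto simp: numeral_eq_Suc less_Suc_eq)
  then show ?thesis unfolding agree_def by auto
qed

lemma agree_5: "agree 5 p q \<longleftrightarrow> bloch p 1 = bloch q 1 \<and> bloch p 2 = bloch q 2 \<and> bloch p 3 = bloch q 3 \<and> bloch p 4 = bloch q 4"
proof -
  have "{1..<5::nat} = {1,2,3,4}" by (auto simp: numeral_eq_Suc less_Suc_eq)
  then show ?thesis unfolding agree_def by auto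
qed

lemma agree_6: "agree 6 p q \<longleftrightarrow> bloch p 1 = bloch q 1 \<and> bloch p 2 = bloch q 2 \<and> bloch p 3 = bloch q 3 \<and> bloch p 4 = bloch q 4 \<and> bloch p 5 = bloch q 5"
proof -
  have "{1..<6::nat} = {1,2,3,4,5}" by (auto simp: numeral_eq_Suc less_Suc_eq)
  then show ?thesis unfolding agree_def by auto
qed

lemma agree_7: "agree 7 p q \<longleftrightarrow> bloch p 1 = bloch q 1 \<and> bloch p 2 = bloch q 2 \<and> bloch p 3 = bloch q 3 \<and> bloch p 4 = bloch q 4 \<and> bloch p 5 = bloch q 5 \<and> bloch p 6 = bloch q 6"
proof -
  have "{1..<7::nat} = {1,2,3,4,5,6}" by (auto simp: numeral_eq_Suc less_Suc_eq)
  then show ?thesis unfolding agree_def by auto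
qed

lemma agree_8: "agree 8 p q \<longleftrightarrow> bloch p 1 = bloch q 1 \<and> bloch p 2 = bloch q 2 \<and> bloch p 3 = bloch q 3 \<and> bloch p 4 = bloch q 4 \<and> bloch p 5 = bloch q 5 \<and> bloch p 6 = bloch q 6 \<and> bloch p 7 = bloch q 7"
proof -
  have "{1..<8::nat} = {1,2,3,4,5,6,7}" by (auto simp: numeral_eq_Suc less_Suc_eq)
  then show ?thesis unfolding agree_def by auto
qed

lemma agree_9: "agree 9 p q \<longleftrightarrow> bloch p 1 = bloch q 1 \<and> bloch p 2 = bloch q 2 \<and> bloch p 3 = bloch q 3 \<and> bloch p 4 = bloch q 4 \<and> bloch p 5 = bloch q 5 \<and> bloch p 6 = bloch q 6 \<and> bloch p 7 = bloch q 7 \<and> bloch p 8 = bloch q 8"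
proof -
  have "{1..<9::nat} = {1,2,3,4,5,6,7,8}" by (auto simp: numeral_eq_Suc less_Suc_eq)
  then show ?thesis unfolding agree_def by auto
qed

lemma agree_10: "agree 10 p q \<longleftrightarrow> bloch p 1 = bloch q 1 \<and> bloch p 2 = bloch q 2 \<and> bloch p 3 = bloch q 3 \<and> bloch p 4 = bloch q 4 \<and> bloch p 5 = bloch q 5 \<and> bloch p 6 = bloch q 6 \<and> bloch p 7 = bloch q 7 \<and> bloch p 8 = bloch q 8 \<and> bloch p 9 = bloch q 9"
proof -
  have "{1..<10::nat} = {1,2,3,4,5,6,7,8,9}" by (auto simp: numeral_eq_Suc less_Suc_eq)
  then show ?thesis unfolding agree_def by auto
qed

lemma agree_11: "agree 11 p q \<longleftrightarrow> bloch p 1 = bloch q 1 \<and> bloch p 2 = bloch q 2 \<and> bloch p 3 = bloch q 3 \<and> bloch p 4 = bloch q 4 \<and> bloch p 5 = bloch q 5 \<and> bloch p 6 = bloch q 6 \<and> bloch p 7 = bloch q 7 \<and> bloch p 8 = bloch q 8 \<and> bloch p 9 = bloch q 9 \<and> bloch p 10 = bloch q 10"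
proof -
  have "{1..<11::nat} = {1,2,3,4,5,6,7,8,9,10}" by (auto simp: numeral_eq_Suc less_Suc_eq)
  then show ?thesis unfolding agree_def by auto
qed

lemma agree_12: "agree 12 p q \<longleftrightarrow> bloch p 1 = bloch q 1 \<and> bloch p 2 = bloch q 2 \<and> bloch p 3 = bloch q 3 \<and> bloch p 4 = bloch q 4 \<and> bloch p 5 = bloch q 5 \<and> bloch p 6 = bloch q 6 \<and> bloch p 7 = bloch q 7 \<and> bloch p 8 = bloch q 8 \<and> bloch p 9 = bloch q 9 \<and> bloch p 10 = bloch q 10 \<and> bloch p 11 = bloch q 11"
proof -
  have "{1..<12::nat} = {1,2,3,4,5,6,7,8,9,10,11}" by (auto simp: numeral_eq_Suc less_Suc_eq)
  then show ?thesis unfolding agree_def by auto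
qed

lemma agree_13: "agree 13 p q \<longleftrightarrow> bloch p 1 = bloch q 1 \<and> bloch p 2 = bloch q 2 \<and> bloch p 3 = bloch q 3 \<and> bloch p 4 = bloch q 4 \<and> bloch p 5 = bloch q 5 \<and> bloch p 6 = bloch q 6 \<and> bloch p 7 = bloch q 7 \<and> bloch p 8 = bloch q 8 \<and> bloch p 9 = bloch q 9 \<and> bloch p 10 = bloch q 10 \<and> bloch p 11 = bloch q 11 \<and> bloch p 12 = bloch q 12"
proof -
  have "{1..<13::nat} = {1,2,3,4,5,6,7,8,9,10,11,12}" by (auto simp: numeral_eq_Suc less_Suc_eq)
  then show ?thesis unfolding agree_def by auto
qed

lemma agree_14: "agree 14 p q \<longleftrightarrow> bloch p 1 = bloch q 1 \<and> bloch p 2 = bloch q 2 \<and> bloch p 3 = bloch q 3 \<and> bloch p 4 = bloch q 4 \<and> bloch p 5 = bloch q 5 \<and> bloch p 6 = bloch q 6 \<and> bloch p 7 = bloch q 7 \<and> bloch p 8 = bloch q 8 \<and> bloch p 9 = bloch q 9 \<and> bloch p 10 = bloch q 10 \<and> bloch p 11 = bloch q 11 \<and> bloch p 12 = bloch q 12 \<and> bloch p 13 = bloch q 13"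
proof -
  have "{1..<14::nat} = {1,2,3,4,5,6,7,8,9,10,11,12,13}" by (auto simp: numeral_eq_Suc less_Suc_eq)
  then show ?thesis unfolding agree_def by auto
qed

lemma agree_15: "agree 15 p q \<longleftrightarrow> bloch p 1 = bloch q 1 \<and> bloch p 2 = bloch q 2 \<and> bloch p 3 = bloch q 3 \<and> bloch p 4 = bloch q 4 \<and> bloch p 5 = bloch q 5 \<and> bloch p 6 = bloch q 6 \<and> bloch p 7 = bloch q 7 \<and> bloch p 8 = bloch q 8 \<and> bloch p 9 = bloch q 9 \<and> bloch p 10 = bloch q 10 \<and> bloch p 11 = bloch q 11 \<and> bloch p 12 = bloch q 12 \<and> bloch p 13 = bloch q 13 \<and> bloch p 14 = bloch q 14"
proof -
  have "{1..<15::nat} = {1,2,3,4,5,6,7,8,9,10,11,12,13,14}" by (auto simp: numeral_eq_Suc less_Suc_eq)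
  then show ?thesis unfolding agree_def by auto
qed

lemma agree_16: "agree 16 p q \<longleftrightarrow> bloch p 1 = bloch q 1 \<and> bloch p 2 = bloch q 2 \<and> bloch p 3 = bloch q 3 \<and> bloch p 4 = bloch q 4 \<and> bloch p 5 = bloch q 5 \<and> bloch p 6 = bloch q 6 \<and> bloch p 7 = bloch q 7 \<and> bloch p 8 = bloch q 8 \<and> bloch p 9 = bloch q 9 \<and> bloch p 10 = bloch q 10 \<and> bloch p 11 = bloch q 11 \<and> bloch p 12 = bloch q 12 \<and> bloch p 13 = bloch q 13 \<and> bloch p 14 = bloch q 14 \<and> bloch p 15 = bloch q 15"
proof -
  have "{1..<16::nat} = {1,2,3,4,5,6,7,8,9,10,11,12,13,14,15}" by (auto simp: numeral_eq_Suc less_Suc_eq)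
  then show ?thesis unfolding agree_def by auto
qed

definition Tz1 :: "(nat \<Rightarrow> complex) \<Rightarrow> nat \<Rightarrow> complex" where
  "Tz1 p = (\<lambda>r. if r = 2 \<or> r = 3 then - p r else p r)"

lemma Tz1_pure: assumes "pure_state p" shows "pure_state (Tz1 p)"
  using assms unfolding pure_state_def sum4 Tz1_def by (simp add: ac_simps)

lemma Tz1_1[simp]: "bloch (Tz1 p) 1 = bloch p 1"
  unfolding bloch_1 bp_1 Tz1_def by (simp add: algebra_simps)

lemma Tz1_2[simp]: "bloch (Tz1 p) 2 = - bloch p 2"
  unfolding bloch_2 bp_2 Tz1_def by (simp add: algebra_simps)

lemma Tz1_3[simp]: "bloch (Tz1 p) 3 = - bloch p 3"
  unfolding bloch_3 bp_3 Tz1_def by (simp add: algebra_simps)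

lemma Tz1_4[simp]: "bloch (Tz1 p) 4 = bloch p 4"
  unfolding bloch_4 bp_4 Tz1_def by (simp add: algebra_simps)

lemma Tz1_5[simp]: "bloch (Tz1 p) 5 = bloch p 5"
  unfolding bloch_5 bp_5 Tz1_def by (simp add: algebra_simps)

lemma Tz1_6[simp]: "bloch (Tz1 p) 6 = bloch p 6"
  unfolding bloch_6 bp_6 Tz1_def by (simp add: algebra_simps)

lemma Tz1_7[simp]: "bloch (Tz1 p) 7 = bloch p 7"
  unfolding bloch_7 bp_7 Tz1_def by (simp add: algebra_simps)

lemma Tz1_8[simp]: "bloch (Tz1 p) 8 = - bloch p 8"
  unfolding bloch_8 bp_8 Tz1_def by (simp add: algebra_simps)

lemma Tz1_9[simp]: "bloch (Tz1 p) 9 = - bloch p 9"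
  unfolding bloch_9 bp_9 Tz1_def by (simp add: algebra_simps)

lemma Tz1_10[simp]: "bloch (Tz1 p) 10 = - bloch p 10"
  unfolding bloch_10 bp_10 Tz1_def by (simp add: algebra_simps)

lemma Tz1_11[simp]: "bloch (Tz1 p) 11 = - bloch p 11"
  unfolding bloch_11 bp_11 Tz1_def by (simp add: algebra_simps)

lemma Tz1_12[simp]: "bloch (Tz1 p) 12 = - bloch p 12"
  unfolding bloch_12 bp_12 Tz1_def by (simp add: algebra_simps)

lemma Tz1_13[simp]: "bloch (Tz1 p) 13 = - bloch p 13"
  unfolding bloch_13 bp_13 Tz1_def by (simp add: algebra_simps)

lemma Tz1_14[simp]: "bloch (Tz1 p) 14 = bloch p 14"
  unfolding bloch_14 bp_14 Tz1_def by (simp add: algebra_simps)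

lemma Tz1_15[simp]: "bloch (Tz1 p) 15 = bloch p 15"
  unfolding bloch_15 bp_15 Tz1_def by (simp add: algebra_simps)

lemma Tz1_16[simp]: "bloch (Tz1 p) 16 = bloch p 16"
  unfolding bloch_16 bp_16 Tz1_def by (simp add: algebra_simps)

definition Tx1 :: "(nat \<Rightarrow> complex) \<Rightarrow> nat \<Rightarrow> complex" where
  "Tx1 p = (\<lambda>r. if r = 0 then p 2 else if r = 1 then p 3 else if r = 2 then p 0 else p 1)"

lemma Tx1_pure: assumes "pure_state p" shows "pure_state (Tx1 p)"
  using assms unfolding pure_state_def sum4 Tx1_def by (simp add: ac_simps)

lemma Tx1_1[simp]: "bloch (Tx1 p) 1 = bloch p 1"
  unfolding bloch_1 bp_1 Tx1_def by (simp add: algebra_simps)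

lemma Tx1_2[simp]: "bloch (Tx1 p) 2 = bloch p 2"
  unfolding bloch_2 bp_2 Tx1_def by (simp add: algebra_simps)

lemma Tx1_3[simp]: "bloch (Tx1 p) 3 = - bloch p 3"
  unfolding bloch_3 bp_3 Tx1_def by (simp add: algebra_simps)

lemma Tx1_4[simp]: "bloch (Tx1 p) 4 = - bloch p 4"
  unfolding bloch_4 bp_4 Tx1_def by (simp add: algebra_simps)

lemma Tx1_5[simp]: "bloch (Tx1 p) 5 = bloch p 5"
  unfolding bloch_5 bp_5 Tx1_def by (simp add: algebra_simps)

lemma Tx1_6[simp]: "bloch (Tx1 p) 6 = bloch p 6"
  unfolding bloch_6 bp_6 Tx1_def by (simp add: algebra_simps)

lemma Tx1_7[simp]: "bloch (Tx1 p) 7 = bloch p 7"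
  unfolding bloch_7 bp_7 Tx1_def by (simp add: algebra_simps)

lemma Tx1_8[simp]: "bloch (Tx1 p) 8 = bloch p 8"
  unfolding bloch_8 bp_8 Tx1_def by (simp add: algebra_simps)

lemma Tx1_9[simp]: "bloch (Tx1 p) 9 = bloch p 9"
  unfolding bloch_9 bp_9 Tx1_def by (simp add: algebra_simps)

lemma Tx1_10[simp]: "bloch (Tx1 p) 10 = bloch p 10"
  unfolding bloch_10 bp_10 Tx1_def by (simp add: algebra_simps)

lemma Tx1_11[simp]: "bloch (Tx1 p) 11 = - bloch p 11"
  unfolding bloch_11 bp_11 Tx1_def by (simp add: algebra_simps)

lemma Tx1_12[simp]: "bloch (Tx1 p) 12 = - bloch p 12"
  unfolding bloch_12 bp_12 Tx1_def by (simp add: algebra_simps)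

lemma Tx1_13[simp]: "bloch (Tx1 p) 13 = - bloch p 13"
  unfolding bloch_13 bp_13 Tx1_def by (simp add: algebra_simps)

lemma Tx1_14[simp]: "bloch (Tx1 p) 14 = - bloch p 14"
  unfolding bloch_14 bp_14 Tx1_def by (simp add: algebra_simps)

lemma Tx1_15[simp]: "bloch (Tx1 p) 15 = - bloch p 15"
  unfolding bloch_15 bp_15 Tx1_def by (simp add: algebra_simps)

lemma Tx1_16[simp]: "bloch (Tx1 p) 16 = - bloch p 16"
  unfolding bloch_16 bp_16 Tx1_def by (simp add: algebra_simps)

definition Tk1 :: "(nat \<Rightarrow> complex) \<Rightarrow> nat \<Rightarrow> complex" where
  "Tk1 p = (\<lambda>r. cnj (if r = 0 then p 2 else if r = 1 then p 3 else if r = 2 then p 0 else p 1))"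

lemma Tk1_pure: assumes "pure_state p" shows "pure_state (Tk1 p)"
  using assms unfolding pure_state_def sum4 Tk1_def by (simp add: ac_simps)

lemma Tk1_1[simp]: "bloch (Tk1 p) 1 = bloch p 1"
  unfolding bloch_1 bp_1 Tk1_def by (simp add: algebra_simps)

lemma Tk1_2[simp]: "bloch (Tk1 p) 2 = bloch p 2"
  unfolding bloch_2 bp_2 Tk1_def by (simp add: algebra_simps)

lemma Tk1_3[simp]: "bloch (Tk1 p) 3 = bloch p 3"
  unfolding bloch_3 bp_3 Tk1_def by (simp add: algebra_simps)

lemma Tk1_4[simp]: "bloch (Tk1 p) 4 = - bloch p 4"
  unfolding bloch_4 bp_4 Tk1_def by (simp add: algebra_simps)

lemma Tk1_5[simp]: "bloch (Tk1 p) 5 = bloch p 5"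
  unfolding bloch_5 bp_5 Tk1_def by (simp add: algebra_simps)

lemma Tk1_6[simp]: "bloch (Tk1 p) 6 = - bloch p 6"
  unfolding bloch_6 bp_6 Tk1_def by (simp add: algebra_simps)

lemma Tk1_7[simp]: "bloch (Tk1 p) 7 = bloch p 7"
  unfolding bloch_7 bp_7 Tk1_def by (simp add: algebra_simps)

lemma Tk1_8[simp]: "bloch (Tk1 p) 8 = bloch p 8"
  unfolding bloch_8 bp_8 Tk1_def by (simp add: algebra_simps)

lemma Tk1_9[simp]: "bloch (Tk1 p) 9 = - bloch p 9"
  unfolding bloch_9 bp_9 Tk1_def by (simp add: algebra_simps)

lemma Tk1_10[simp]: "bloch (Tk1 p) 10 = bloch p 10"
  unfolding bloch_10 bp_10 Tk1_def by (simp add: algebra_simps)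

lemma Tk1_11[simp]: "bloch (Tk1 p) 11 = bloch p 11"
  unfolding bloch_11 bp_11 Tk1_def by (simp add: algebra_simps)

lemma Tk1_12[simp]: "bloch (Tk1 p) 12 = - bloch p 12"
  unfolding bloch_12 bp_12 Tk1_def by (simp add: algebra_simps)

lemma Tk1_13[simp]: "bloch (Tk1 p) 13 = bloch p 13"
  unfolding bloch_13 bp_13 Tk1_def by (simp add: algebra_simps)

lemma Tk1_14[simp]: "bloch (Tk1 p) 14 = - bloch p 14"
  unfolding bloch_14 bp_14 Tk1_def by (simp add: algebra_simps)

lemma Tk1_15[simp]: "bloch (Tk1 p) 15 = bloch p 15"
  unfolding bloch_15 bp_15 Tk1_def by (simp add: algebra_simps)

lemma Tk1_16[simp]: "bloch (Tk1 p) 16 = - bloch p 16"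
  unfolding bloch_16 bp_16 Tk1_def by (simp add: algebra_simps)

definition Tz2 :: "(nat \<Rightarrow> complex) \<Rightarrow> nat \<Rightarrow> complex" where
  "Tz2 p = (\<lambda>r. if r = 1 \<or> r = 3 then - p r else p r)"

lemma Tz2_pure: assumes "pure_state p" shows "pure_state (Tz2 p)"
  using assms unfolding pure_state_def sum4 Tz2_def by (simp add: ac_simps)

lemma Tz2_1[simp]: "bloch (Tz2 p) 1 = bloch p 1"
  unfolding bloch_1 bp_1 Tz2_def by (simp add: algebra_simps)

lemma Tz2_2[simp]: "bloch (Tz2 p) 2 = bloch p 2"
  unfolding bloch_2 bp_2 Tz2_def by (simp add: algebra_simps)

lemma Tz2_3[simp]: "bloch (Tz2 p) 3 = bloch p 3"
  unfolding bloch_3 bp_3 Tz2_def by (simp add: algebra_simps)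

lemma Tz2_4[simp]: "bloch (Tz2 p) 4 = bloch p 4"
  unfolding bloch_4 bp_4 Tz2_def by (simp add: algebra_simps)

lemma Tz2_5[simp]: "bloch (Tz2 p) 5 = - bloch p 5"
  unfolding bloch_5 bp_5 Tz2_def by (simp add: algebra_simps)

lemma Tz2_6[simp]: "bloch (Tz2 p) 6 = - bloch p 6"
  unfolding bloch_6 bp_6 Tz2_def by (simp add: algebra_simps)

lemma Tz2_7[simp]: "bloch (Tz2 p) 7 = bloch p 7"
  unfolding bloch_7 bp_7 Tz2_def by (simp add: algebra_simps)

lemma Tz2_8[simp]: "bloch (Tz2 p) 8 = - bloch p 8"
  unfolding bloch_8 bp_8 Tz2_def by (simp add: algebra_simps)

lemma Tz2_9[simp]: "bloch (Tz2 p) 9 = - bloch p 9"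
  unfolding bloch_9 bp_9 Tz2_def by (simp add: algebra_simps)

lemma Tz2_10[simp]: "bloch (Tz2 p) 10 = bloch p 10"
  unfolding bloch_10 bp_10 Tz2_def by (simp add: algebra_simps)

lemma Tz2_11[simp]: "bloch (Tz2 p) 11 = - bloch p 11"
  unfolding bloch_11 bp_11 Tz2_def by (simp add: algebra_simps)

lemma Tz2_12[simp]: "bloch (Tz2 p) 12 = - bloch p 12"
  unfolding bloch_12 bp_12 Tz2_def by (simp add: algebra_simps)

lemma Tz2_13[simp]: "bloch (Tz2 p) 13 = bloch p 13"
  unfolding bloch_13 bp_13 Tz2_def by (simp add: algebra_simps)

lemma Tz2_14[simp]: "bloch (Tz2 p) 14 = - bloch p 14"
  unfolding bloch_14 bp_14 Tz2_def by (simp add: algebra_simps)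

lemma Tz2_15[simp]: "bloch (Tz2 p) 15 = - bloch p 15"
  unfolding bloch_15 bp_15 Tz2_def by (simp add: algebra_simps)

lemma Tz2_16[simp]: "bloch (Tz2 p) 16 = bloch p 16"
  unfolding bloch_16 bp_16 Tz2_def by (simp add: algebra_simps)

definition Tx2 :: "(nat \<Rightarrow> complex) \<Rightarrow> nat \<Rightarrow> complex" where
  "Tx2 p = (\<lambda>r. if r = 0 then p 1 else if r = 1 then p 0 else if r = 2 then p 3 else p 2)"

lemma Tx2_pure: assumes "pure_state p" shows "pure_state (Tx2 p)"
  using assms unfolding pure_state_def sum4 Tx2_def by (simp add: ac_simps)

lemma Tx2_1[simp]: "bloch (Tx2 p) 1 = bloch p 1"
  unfolding bloch_1 bp_1 Tx2_def by (simp add: algebra_simps)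

lemma Tx2_2[simp]: "bloch (Tx2 p) 2 = bloch p 2"
  unfolding bloch_2 bp_2 Tx2_def by (simp add: algebra_simps)

lemma Tx2_3[simp]: "bloch (Tx2 p) 3 = bloch p 3"
  unfolding bloch_3 bp_3 Tx2_def by (simp add: algebra_simps)

lemma Tx2_4[simp]: "bloch (Tx2 p) 4 = bloch p 4"
  unfolding bloch_4 bp_4 Tx2_def by (simp add: algebra_simps)

lemma Tx2_5[simp]: "bloch (Tx2 p) 5 = bloch p 5"
  unfolding bloch_5 bp_5 Tx2_def by (simp add: algebra_simps)

lemma Tx2_6[simp]: "bloch (Tx2 p) 6 = - bloch p 6"
  unfolding bloch_6 bp_6 Tx2_def by (simp add: algebra_simps)

lemma Tx2_7[simp]: "bloch (Tx2 p) 7 = - bloch p 7"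
  unfolding bloch_7 bp_7 Tx2_def by (simp add: algebra_simps)

lemma Tx2_8[simp]: "bloch (Tx2 p) 8 = bloch p 8"
  unfolding bloch_8 bp_8 Tx2_def by (simp add: algebra_simps)

lemma Tx2_9[simp]: "bloch (Tx2 p) 9 = - bloch p 9"
  unfolding bloch_9 bp_9 Tx2_def by (simp add: algebra_simps)

lemma Tx2_10[simp]: "bloch (Tx2 p) 10 = - bloch p 10"
  unfolding bloch_10 bp_10 Tx2_def by (simp add: algebra_simps)

lemma Tx2_11[simp]: "bloch (Tx2 p) 11 = bloch p 11"
  unfolding bloch_11 bp_11 Tx2_def by (simp add: algebra_simps)

lemma Tx2_12[simp]: "bloch (Tx2 p) 12 = - bloch p 12"
  unfolding bloch_12 bp_12 Tx2_def by (simp add: algebra_simps)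

lemma Tx2_13[simp]: "bloch (Tx2 p) 13 = - bloch p 13"
  unfolding bloch_13 bp_13 Tx2_def by (simp add: algebra_simps)

lemma Tx2_14[simp]: "bloch (Tx2 p) 14 = bloch p 14"
  unfolding bloch_14 bp_14 Tx2_def by (simp add: algebra_simps)

lemma Tx2_15[simp]: "bloch (Tx2 p) 15 = - bloch p 15"
  unfolding bloch_15 bp_15 Tx2_def by (simp add: algebra_simps)

lemma Tx2_16[simp]: "bloch (Tx2 p) 16 = - bloch p 16"
  unfolding bloch_16 bp_16 Tx2_def by (simp add: algebra_simps)
lemma agree_refl: "agree i p p" unfolding agree_def by auto

lemma cv_eq: "cond_vals q i = {bloch p i | p. pure_state p \<and> agree i p q}"
  unfolding cond_vals_def agree_def by simp

lemma hmid_eq: "hmid q i = (Sup (cond_vals q i) + Inf (cond_vals q i)) / 2"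
  unfolding hmid_def bmax_def bmin_def by simp

lemma in_cv: "pure_state q \<Longrightarrow> bloch q i \<in> cond_vals q i"
  unfolding cv_eq using agree_refl by blast

lemma stage_single:
  assumes "pure_state q" "\<And>p. pure_state p \<Longrightarrow> agree i p q \<Longrightarrow> bloch p i = bloch q i"
  shows "D_chi2 (bloch q i) (hmid q i) = 0"
  unfolding hmid_eq
  by (rule S_single[OF in_cv[OF assms(1)]]) (auto simp: cv_eq assms(2))

lemma stage_two:
  assumes "pure_state q" "\<And>p. pure_state p \<Longrightarrow> agree i p q \<Longrightarrow> (bloch p i)\<^sup>2 = (bloch q i)\<^sup>2"
  shows "D_chi2 (bloch q i) (hmid q i) \<le> (bloch q i)\<^sup>2"
proof -
  have "cond_vals q i \<subseteq> {bloch q i, - bloch q i}"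
  proof
    fix x assume "x \<in> cond_vals q i"
    then obtain p where "pure_state p" "agree i p q" "x = bloch p i" unfolding cv_eq by blast
    then have "x\<^sup>2 = (bloch q i)\<^sup>2" using assms(2) by simp
    then show "x \<in> {bloch q i, - bloch q i}" using power2_eq_iff by blast
  qed
  then show ?thesis unfolding hmid_eq using S_two(1)[OF in_cv[OF assms(1)]] by blast
qed

lemma stage_two_eq:
  assumes "pure_state q" "\<And>p. pure_state p \<Longrightarrow> agree i p q \<Longrightarrow> (bloch p i)\<^sup>2 = (bloch q i)\<^sup>2"
    "pure_state p0" "agree i p0 q" "bloch p0 i = - bloch q i"
  shows "D_chi2 (bloch q i) (hmid q i) = (bloch q i)\<^sup>2"
proof -
  have "cond_vals q i \<subseteq> {bloch q i, - bloch q i}"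
  proof
    fix x assume "x \<in> cond_vals q i"
    then obtain p where "pure_state p" "agree i p q" "x = bloch p i" unfolding cv_eq by blast
    then have "x\<^sup>2 = (bloch q i)\<^sup>2" using assms(2) by simp
    then show "x \<in> {bloch q i, - bloch q i}" using power2_eq_iff by blast
  qed
  moreover have "- bloch q i \<in> cond_vals q i" unfolding cv_eq using assms(3-5) by (metis (mono_tags, lifting) mem_Collect_eq)
  ultimately show ?thesis unfolding hmid_eq using S_two(2)[OF in_cv[OF assms(1)]] by blast
qed

lemma stage_sym:
  assumes "pure_state q" "\<And>p. pure_state p \<Longrightarrow> agree i p q \<Longrightarrow> \<bar>bloch p i\<bar> \<le> 1"
    "\<And>p. pure_state p \<Longrightarrow> agree i p q \<Longrightarrow> pure_state (T p) \<and> agree i (T p) q \<and> bloch (T p) i = - bloch p i"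
  shows "D_chi2 (bloch q i) (hmid q i) = (bloch q i)\<^sup>2"
proof -
  have sub: "cond_vals q i \<subseteq> {-1..1}"
  proof
    fix x assume "x \<in> cond_vals q i"
    then obtain p where "pure_state p" "agree i p q" "x = bloch p i" unfolding cv_eq by blast
    then show "x \<in> {-1..1}" using assms(2) by (auto simp: abs_le_iff)
  qed
  have sym: "\<forall>x\<in>cond_vals q i. -x \<in> cond_vals q i"
  proof
    fix x assume "x \<in> cond_vals q i"
    then obtain p where p: "pure_state p" "agree i p q" "x = bloch p i" unfolding cv_eq by blast
    then have "pure_state (T p)" "agree i (T p) q" "bloch (T p) i = - x" using assms(3) by auto
    then show "-x \<in> cond_vals q i" unfolding cv_eq by (metis (mono_tags, lifting) mem_Collect_eq)
  qed
  have "hmid q i = 0" unfolding hmid_eq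
    by (rule S_sym[OF in_cv[OF assms(1)] _ _ sym]) (use sub in \<open>auto intro: bdd_above_mono bdd_below_mono\<close>)
  then show ?thesis by (simp add: D_zero)
qed

lemma stage_A:
  assumes "pure_state q" "\<And>p. pure_state p \<Longrightarrow> agree i p q \<Longrightarrow> a - s*\<rho> \<le> bloch p i \<and> bloch p i \<le> a + s*\<rho>"
    "\<bar>a\<bar> + \<rho> \<le> 1" "0 \<le> s" "s \<le> 1" "0 \<le> \<rho>"
  shows "D_chi2 (bloch q i) (hmid q i) \<le> s\<^sup>2"
proof -
  have sub: "cond_vals q i \<subseteq> {a - s*\<rho>..a + s*\<rho>}"
  proof
    fix x assume "x \<in> cond_vals q i"
    then obtain p where "pure_state p" "agree i p q" "x = bloch p i" unfolding cv_eq by blast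
    then show "x \<in> {a - s*\<rho>..a + s*\<rho>}" using assms(2) by auto
  qed
  show ?thesis unfolding hmid_eq by (rule S_A[OF in_cv[OF assms(1)] sub assms(3-6)])
qed

lemma Tz1_Suc0[simp]: "bloch (Tz1 p) (Suc 0) = bloch p (Suc 0)" using Tz1_1[of p] by simp
lemma Tx1_Suc0[simp]: "bloch (Tx1 p) (Suc 0) = bloch p (Suc 0)" using Tx1_1[of p] by simp
lemma Tk1_Suc0[simp]: "bloch (Tk1 p) (Suc 0) = bloch p (Suc 0)" using Tk1_1[of p] by simp
lemma Tz2_Suc0[simp]: "bloch (Tz2 p) (Suc 0) = bloch p (Suc 0)" using Tz2_1[of p] by simp
lemma Tx2_Suc0[simp]: "bloch (Tx2 p) (Suc 0) = bloch p (Suc 0)" using Tx2_1[of p] by simp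

lemma bnd:
  assumes "pure_state p"
  shows "\<bar>bloch p 2\<bar> \<le> 1" "\<bar>bloch p 3\<bar> \<le> 1" "\<bar>bloch p 4\<bar> \<le> 1"
    "\<bar>bloch p 5\<bar> \<le> 1" "\<bar>bloch p 6\<bar> \<le> 1" "\<bar>bloch p 7\<bar> \<le> 1"
    "\<bar>bloch p 8\<bar> \<le> 1" "\<bar>bloch p 9\<bar> \<le> 1" "\<bar>bloch p 10\<bar> \<le> 1"
    "\<bar>bloch p 11\<bar> \<le> 1" "\<bar>bloch p 12\<bar> \<le> 1" "\<bar>bloch p 13\<bar> \<le> 1"
    "\<bar>bloch p 14\<bar> \<le> 1" "\<bar>bloch p 15\<bar> \<le> 1" "\<bar>bloch p 16\<bar> \<le> 1"
proof -
  note h = H0[OF assms] H1[OF assms] H3_11[OF assms] H3_22[OF assms] H3_33[OF assms]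
  have s: "\<And>x::real. 0 \<le> x\<^sup>2" by simp
  have s2: "\<And>x::real. x * x = x\<^sup>2" by (simp add: power2_eq_square)
  note hh = h[unfolded s2]
  show "\<bar>bloch p 2\<bar> \<le> 1" "\<bar>bloch p 3\<bar> \<le> 1" "\<bar>bloch p 4\<bar> \<le> 1"
    "\<bar>bloch p 5\<bar> \<le> 1" "\<bar>bloch p 6\<bar> \<le> 1" "\<bar>bloch p 7\<bar> \<le> 1"
    "\<bar>bloch p 8\<bar> \<le> 1" "\<bar>bloch p 9\<bar> \<le> 1" "\<bar>bloch p 10\<bar> \<le> 1"
    "\<bar>bloch p 11\<bar> \<le> 1" "\<bar>bloch p 12\<bar> \<le> 1" "\<bar>bloch p 13\<bar> \<le> 1"
    "\<bar>bloch p 14\<bar> \<le> 1" "\<bar>bloch p 15\<bar> \<le> 1" "\<bar>bloch p 16\<bar> \<le> 1"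
    by (rule sq_le1; insert hh s[of "bloch p 2"] s[of "bloch p 3"] s[of "bloch p 4"] s[of "bloch p 5"]
      s[of "bloch p 6"] s[of "bloch p 7"] s[of "bloch p 8"] s[of "bloch p 9"] s[of "bloch p 10"]
      s[of "bloch p 11"] s[of "bloch p 12"] s[of "bloch p 13"] s[of "bloch p 14"] s[of "bloch p 15"] s[of "bloch p 16"]; linarith)+
qed


abbreviation rr :: "(nat \<Rightarrow> complex) \<Rightarrow> real" where
  "rr q \<equiv> (bloch q 2)\<^sup>2 + (bloch q 3)\<^sup>2 + (bloch q 4)\<^sup>2"

lemma agree_mono: "agree i p q \<Longrightarrow> j \<le> i \<Longrightarrow> agree j p q"
  unfolding agree_def by auto

lemma stage_A_C:
  assumes q: "pure_state q" and r: "0 < rr q" and A: "A\<^sup>2 \<le> rr q" and B: "B\<^sup>2 \<le> rr q"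
    and h: "\<And>p. pure_state p \<Longrightarrow> agree i p q \<Longrightarrow> (rr q * bloch p i - A*B)\<^sup>2 \<le> (1 - rr q)*(rr q - A\<^sup>2)*(rr q - B\<^sup>2)"
  shows "D_chi2 (bloch q i) (hmid q i) \<le> 1 - rr q"
proof -
  have r1: "rr q \<le> 1" using H0[OF q] .
  have x1: "A\<^sup>2 / rr q \<le> 1" "B\<^sup>2 / rr q \<le> 1" using A B r by simp_all
  have nn: "0 \<le> (1 - A\<^sup>2/rr q)*(1 - B\<^sup>2/rr q)" using x1 by simp
  have "D_chi2 (bloch q i) (hmid q i) \<le> (sqrt (1 - rr q))\<^sup>2"
  proof (rule stage_A[OF q, where a="A*B/rr q" and \<rho>="sqrt ((1 - A\<^sup>2/rr q)*(1 - B\<^sup>2/rr q))"])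
    fix p assume "pure_state p" "agree i p q"
    then show "A * B / rr q - sqrt (1 - rr q) * sqrt ((1 - A\<^sup>2 / rr q) * (1 - B\<^sup>2 / rr q)) \<le> bloch p i \<and>
         bloch p i \<le> A * B / rr q + sqrt (1 - rr q) * sqrt ((1 - A\<^sup>2 / rr q) * (1 - B\<^sup>2 / rr q))"
      using interval_conv[OF r r1 A B h] by blast
  next
    show "\<bar>A * B / rr q\<bar> + sqrt ((1 - A\<^sup>2 / rr q) * (1 - B\<^sup>2 / rr q)) \<le> 1"
      using interval_conv2[OF r r1 A B] by blast
  qed (use r1 nn r in auto)
  then show ?thesis using r1 by simp
qed

lemma rowA:
  assumes p: "pure_state p" and q: "pure_state q" and ag: "agree 8 p q" and r: "0 < rr q"
  shows "(rr q * bloch p 8 - bloch q 2 * bloch q 5)\<^sup>2 \<le> (1 - rr q)*(rr q - (bloch q 2)\<^sup>2)*(rr q - (bloch q 5)\<^sup>2)"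
    "(rr q * bloch p 9 - bloch q 2 * bloch q 6)\<^sup>2 \<le> (1 - rr q)*(rr q - (bloch q 2)\<^sup>2)*(rr q - (bloch q 6)\<^sup>2)"
    "(rr q * bloch p 10 - bloch q 2 * bloch q 7)\<^sup>2 \<le> (1 - rr q)*(rr q - (bloch q 2)\<^sup>2)*(rr q - (bloch q 7)\<^sup>2)"
    "(rr q * bloch p 11 - bloch q 3 * bloch q 5)\<^sup>2 \<le> (1 - rr q)*(rr q - (bloch q 3)\<^sup>2)*(rr q - (bloch q 5)\<^sup>2)"
    "(rr q * bloch p 12 - bloch q 3 * bloch q 6)\<^sup>2 \<le> (1 - rr q)*(rr q - (bloch q 3)\<^sup>2)*(rr q - (bloch q 6)\<^sup>2)"
    "(rr q * bloch p 13 - bloch q 3 * bloch q 7)\<^sup>2 \<le> (1 - rr q)*(rr q - (bloch q 3)\<^sup>2)*(rr q - (bloch q 7)\<^sup>2)"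
    "(rr q * bloch p 14 - bloch q 4 * bloch q 5)\<^sup>2 \<le> (1 - rr q)*(rr q - (bloch q 4)\<^sup>2)*(rr q - (bloch q 5)\<^sup>2)"
    "(rr q * bloch p 15 - bloch q 4 * bloch q 6)\<^sup>2 \<le> (1 - rr q)*(rr q - (bloch q 4)\<^sup>2)*(rr q - (bloch q 6)\<^sup>2)"
    "(rr q * bloch p 16 - bloch q 4 * bloch q 7)\<^sup>2 \<le> (1 - rr q)*(rr q - (bloch q 4)\<^sup>2)*(rr q - (bloch q 7)\<^sup>2)"
proof -
  have e: "bloch p 2 = bloch q 2" "bloch p 3 = bloch q 3" "bloch p 4 = bloch q 4"
    "bloch p 5 = bloch q 5" "bloch p 6 = bloch q 6" "bloch p 7 = bloch q 7" using ag unfolding agree_8 by auto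
  have h1: "(bloch q 5)\<^sup>2 + (bloch q 6)\<^sup>2 + (bloch q 7)\<^sup>2 = rr q" using H1[OF q] by simp
  note r1 = row_bound3[OF h1 H2_1[OF p, unfolded e] H3_11[OF p, unfolded e] r]
  note r2 = row_bound3[OF h1 H2_2[OF p, unfolded e] H3_22[OF p, unfolded e] r]
  note r3 = row_bound3[OF h1 H2_3[OF p, unfolded e] H3_33[OF p, unfolded e] r]
  show "(rr q * bloch p 8 - bloch q 2 * bloch q 5)\<^sup>2 \<le> (1 - rr q)*(rr q - (bloch q 2)\<^sup>2)*(rr q - (bloch q 5)\<^sup>2)"
    "(rr q * bloch p 9 - bloch q 2 * bloch q 6)\<^sup>2 \<le> (1 - rr q)*(rr q - (bloch q 2)\<^sup>2)*(rr q - (bloch q 6)\<^sup>2)"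
    "(rr q * bloch p 10 - bloch q 2 * bloch q 7)\<^sup>2 \<le> (1 - rr q)*(rr q - (bloch q 2)\<^sup>2)*(rr q - (bloch q 7)\<^sup>2)"
    "(rr q * bloch p 11 - bloch q 3 * bloch q 5)\<^sup>2 \<le> (1 - rr q)*(rr q - (bloch q 3)\<^sup>2)*(rr q - (bloch q 5)\<^sup>2)"
    "(rr q * bloch p 12 - bloch q 3 * bloch q 6)\<^sup>2 \<le> (1 - rr q)*(rr q - (bloch q 3)\<^sup>2)*(rr q - (bloch q 6)\<^sup>2)"
    "(rr q * bloch p 13 - bloch q 3 * bloch q 7)\<^sup>2 \<le> (1 - rr q)*(rr q - (bloch q 3)\<^sup>2)*(rr q - (bloch q 7)\<^sup>2)"
    "(rr q * bloch p 14 - bloch q 4 * bloch q 5)\<^sup>2 \<le> (1 - rr q)*(rr q - (bloch q 4)\<^sup>2)*(rr q - (bloch q 5)\<^sup>2)"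
    "(rr q * bloch p 15 - bloch q 4 * bloch q 6)\<^sup>2 \<le> (1 - rr q)*(rr q - (bloch q 4)\<^sup>2)*(rr q - (bloch q 6)\<^sup>2)"
    "(rr q * bloch p 16 - bloch q 4 * bloch q 7)\<^sup>2 \<le> (1 - rr q)*(rr q - (bloch q 4)\<^sup>2)*(rr q - (bloch q 7)\<^sup>2)"
    using r1 r2 r3 by simp_all
qed

lemma dC_pos:
  assumes q: "pure_state q" and r: "0 < rr q"
  shows "D_chi2 (bloch q 8) (hmid q 8) \<le> 1 - rr q" "D_chi2 (bloch q 9) (hmid q 9) \<le> 1 - rr q"
    "D_chi2 (bloch q 10) (hmid q 10) \<le> 1 - rr q" "D_chi2 (bloch q 11) (hmid q 11) \<le> 1 - rr q"
    "D_chi2 (bloch q 12) (hmid q 12) \<le> 1 - rr q" "D_chi2 (bloch q 13) (hmid q 13) \<le> 1 - rr q"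
    "D_chi2 (bloch q 14) (hmid q 14) \<le> 1 - rr q" "D_chi2 (bloch q 15) (hmid q 15) \<le> 1 - rr q"
    "D_chi2 (bloch q 16) (hmid q 16) \<le> 1 - rr q"
proof -
  have a: "(bloch q 2)\<^sup>2 \<le> rr q" "(bloch q 3)\<^sup>2 \<le> rr q" "(bloch q 4)\<^sup>2 \<le> rr q" by simp_all
  have h1: "(bloch q 5)\<^sup>2 + (bloch q 6)\<^sup>2 + (bloch q 7)\<^sup>2 = rr q" using H1[OF q] by simp
  have b: "(bloch q 5)\<^sup>2 \<le> rr q" "(bloch q 6)\<^sup>2 \<le> rr q" "(bloch q 7)\<^sup>2 \<le> rr q"
    using h1 zero_le_power2[of "bloch q 5"] zero_le_power2[of "bloch q 6"] zero_le_power2[of "bloch q 7"] by linarith+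
  have ag: "\<And>p i. agree i p q \<Longrightarrow> 8 \<le> i \<Longrightarrow> agree 8 p q" using agree_mono by blast
  show "D_chi2 (bloch q 8) (hmid q 8) \<le> 1 - rr q"
    by (rule stage_A_C[OF q r a(1) b(1)]) (rule rowA(1)[OF _ q _ r], assumption, erule agree_mono, simp)
  show "D_chi2 (bloch q 9) (hmid q 9) \<le> 1 - rr q"
    by (rule stage_A_C[OF q r a(1) b(2)]) (rule rowA(2)[OF _ q _ r], assumption, erule agree_mono, simp)
  show "D_chi2 (bloch q 10) (hmid q 10) \<le> 1 - rr q"
    by (rule stage_A_C[OF q r a(1) b(3)]) (rule rowA(3)[OF _ q _ r], assumption, erule agree_mono, simp)
  show "D_chi2 (bloch q 11) (hmid q 11) \<le> 1 - rr q"
    by (rule stage_A_C[OF q r a(2) b(1)]) (rule rowA(4)[OF _ q _ r], assumption, erule agree_mono, simp)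
  show "D_chi2 (bloch q 12) (hmid q 12) \<le> 1 - rr q"
    by (rule stage_A_C[OF q r a(2) b(2)]) (rule rowA(5)[OF _ q _ r], assumption, erule agree_mono, simp)
  show "D_chi2 (bloch q 13) (hmid q 13) \<le> 1 - rr q"
    by (rule stage_A_C[OF q r a(2) b(3)]) (rule rowA(6)[OF _ q _ r], assumption, erule agree_mono, simp)
  show "D_chi2 (bloch q 14) (hmid q 14) \<le> 1 - rr q"
    by (rule stage_A_C[OF q r a(3) b(1)]) (rule rowA(7)[OF _ q _ r], assumption, erule agree_mono, simp)
  show "D_chi2 (bloch q 15) (hmid q 15) \<le> 1 - rr q"
    by (rule stage_A_C[OF q r a(3) b(2)]) (rule rowA(8)[OF _ q _ r], assumption, erule agree_mono, simp)
  show "D_chi2 (bloch q 16) (hmid q 16) \<le> 1 - rr q"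
    by (rule stage_A_C[OF q r a(3) b(3)]) (rule rowA(9)[OF _ q _ r], assumption, erule agree_mono, simp)
qed


lemma d_ab:
  assumes q: "pure_state q"
  shows "D_chi2 (bloch q 2) (hmid q 2) = (bloch q 2)\<^sup>2"
    "D_chi2 (bloch q 3) (hmid q 3) = (bloch q 3)\<^sup>2"
    "D_chi2 (bloch q 4) (hmid q 4) = (bloch q 4)\<^sup>2"
    "D_chi2 (bloch q 5) (hmid q 5) = (bloch q 5)\<^sup>2"
    "D_chi2 (bloch q 6) (hmid q 6) = (bloch q 6)\<^sup>2"
    "D_chi2 (bloch q 7) (hmid q 7) \<le> (bloch q 7)\<^sup>2"
proof -
  show "D_chi2 (bloch q 2) (hmid q 2) = (bloch q 2)\<^sup>2"
    by (rule stage_sym[OF q, where T=Tz1]) (auto simp: agree_2 Tz1_pure bnd)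
  show "D_chi2 (bloch q 3) (hmid q 3) = (bloch q 3)\<^sup>2"
    by (rule stage_sym[OF q, where T=Tx1]) (auto simp: agree_3 Tx1_pure bnd)
  show "D_chi2 (bloch q 4) (hmid q 4) = (bloch q 4)\<^sup>2"
    by (rule stage_sym[OF q, where T=Tk1]) (auto simp: agree_4 Tk1_pure bnd)
  show "D_chi2 (bloch q 5) (hmid q 5) = (bloch q 5)\<^sup>2"
    by (rule stage_sym[OF q, where T=Tz2]) (auto simp: agree_5 Tz2_pure bnd)
  show "D_chi2 (bloch q 6) (hmid q 6) = (bloch q 6)\<^sup>2"
    by (rule stage_sym[OF q, where T=Tx2]) (auto simp: agree_6 Tx2_pure bnd)
  show "D_chi2 (bloch q 7) (hmid q 7) \<le> (bloch q 7)\<^sup>2"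
  proof (rule stage_two[OF q])
    fix p assume p: "pure_state p" "agree 7 p q"
    then have e: "bloch p 2 = bloch q 2" "bloch p 3 = bloch q 3" "bloch p 4 = bloch q 4"
      "bloch p 5 = bloch q 5" "bloch p 6 = bloch q 6" unfolding agree_7 by auto
    show "(bloch p 7)\<^sup>2 = (bloch q 7)\<^sup>2" using H1[OF p(1)] H1[OF q] unfolding e by linarith
  qed
qed

lemma C_r1:
  assumes q: "pure_state q" and r: "rr q = 1" and i: "8 \<le> i" "i \<le> 16"
  shows "D_chi2 (bloch q i) (hmid q i) = 0"
proof (rule stage_single[OF q])
  fix p assume p: "pure_state p" "agree i p q"
  then have ag: "agree 8 p q" using agree_mono i by blast
  have e: "bloch p 2 = bloch q 2" "bloch p 3 = bloch q 3" "bloch p 4 = bloch q 4"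
    "bloch p 5 = bloch q 5" "bloch p 6 = bloch q 6" "bloch p 7 = bloch q 7" using ag unfolding agree_8 by auto
  have h1p: "(bloch q 5)\<^sup>2 + (bloch q 6)\<^sup>2 + (bloch q 7)\<^sup>2 = rr q" using H1[OF q] by simp
  have z: "rr q * (1 - rr q) * (rr q - A\<^sup>2) = 0" for A using r by simp
  note p1 = rowU0[OF h1p H2_1[OF p(1), unfolded e] H3_11[OF p(1), unfolded e] z]
  note p2 = rowU0[OF h1p H2_2[OF p(1), unfolded e] H3_22[OF p(1), unfolded e] z]
  note p3 = rowU0[OF h1p H2_3[OF p(1), unfolded e] H3_33[OF p(1), unfolded e] z]
  note q1 = rowU0[OF h1p H2_1[OF q] H3_11[OF q] z]
  note q2 = rowU0[OF h1p H2_2[OF q] H3_22[OF q] z]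
  note q3 = rowU0[OF h1p H2_3[OF q] H3_33[OF q] z]
  have "i \<in> {8,9,10,11,12,13,14,15,16}" using i by auto
  then show "bloch p i = bloch q i" using p1 p2 p3 q1 q2 q3 r by auto
qed


abbreviation DD :: "(nat \<Rightarrow> complex) \<Rightarrow> nat \<Rightarrow> real" where
  "DD q i \<equiv> D_chi2 (bloch q i) (hmid q i)"

lemma row3_single:
  assumes q: "pure_state q" and i: "14 \<le> i" "i \<le> 16"
  shows "DD q i = 0"
proof (rule stage_single[OF q])
  fix p assume p: "pure_state p" "agree i p q"
  then have ag: "agree 14 p q" using agree_mono i by blast
  then have e: "bloch p 4 = bloch q 4" "bloch p 5 = bloch q 5" "bloch p 6 = bloch q 6" "bloch p 7 = bloch q 7"
    "bloch p 8 = bloch q 8" "bloch p 9 = bloch q 9" "bloch p 10 = bloch q 10"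
    "bloch p 11 = bloch q 11" "bloch p 12 = bloch q 12" "bloch p 13 = bloch q 13" unfolding agree_14 by auto
  have "bloch p 14 = bloch q 14" using H4_1[OF p(1)] H4_1[OF q] unfolding e by linarith
  moreover have "bloch p 15 = bloch q 15" using H4_2[OF p(1)] H4_2[OF q] unfolding e by linarith
  moreover have "bloch p 16 = bloch q 16" using H4_3[OF p(1)] H4_3[OF q] unfolding e by linarith
  moreover have "i \<in> {14,15,16}" using i by auto
  ultimately show "bloch p i = bloch q i" by auto
qed

lemma row2_single:
  assumes q: "pure_state q" and nz: "(bloch q 3)\<^sup>2 + (bloch q 4)\<^sup>2 \<noteq> 0" and i: "11 \<le> i" "i \<le> 13"
  shows "DD q i = 0"
proof (rule stage_single[OF q])
  fix p assume p: "pure_state p" "agree i p q"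
  then have ag: "agree 11 p q" using agree_mono i by blast
  then have e: "bloch p 2 = bloch q 2" "bloch p 3 = bloch q 3" "bloch p 4 = bloch q 4" "bloch p 5 = bloch q 5" "bloch p 6 = bloch q 6" "bloch p 7 = bloch q 7"
    "bloch p 8 = bloch q 8" "bloch p 9 = bloch q 9" "bloch p 10 = bloch q 10" unfolding agree_11 by auto
  have "((bloch q 3)\<^sup>2 + (bloch q 4)\<^sup>2) * bloch p 11 = ((bloch q 3)\<^sup>2 + (bloch q 4)\<^sup>2) * bloch q 11"
    using H5_1[OF p(1)] H5_1[OF q] unfolding e by linarith
  then have "bloch p 11 = bloch q 11" using nz by (metis mult_left_cancel)
  moreover have "((bloch q 3)\<^sup>2 + (bloch q 4)\<^sup>2) * bloch p 12 = ((bloch q 3)\<^sup>2 + (bloch q 4)\<^sup>2) * bloch q 12"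
    using H5_2[OF p(1)] H5_2[OF q] unfolding e by linarith
  then have "bloch p 12 = bloch q 12" using nz by (metis mult_left_cancel)
  moreover have "((bloch q 3)\<^sup>2 + (bloch q 4)\<^sup>2) * bloch p 13 = ((bloch q 3)\<^sup>2 + (bloch q 4)\<^sup>2) * bloch q 13"
    using H5_3[OF p(1)] H5_3[OF q] unfolding e by linarith
  then have "bloch p 13 = bloch q 13" using nz by (metis mult_left_cancel)
  moreover have "i \<in> {11,12,13}" using i by auto
  ultimately show "bloch p i = bloch q i" by auto
qed

lemma row1_single:
  assumes q: "pure_state q" and r: "0 < rr q" and z: "bloch q 3 = 0" "bloch q 4 = 0" and i: "8 \<le> i" "i \<le> 10"
  shows "DD q i = 0"
proof (rule stage_single[OF q])
  fix p assume p: "pure_state p" "agree i p q"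
  then have ag: "agree 8 p q" using agree_mono i by blast
  have e: "bloch p 2 = bloch q 2" "bloch p 3 = bloch q 3" "bloch p 4 = bloch q 4"
    "bloch p 5 = bloch q 5" "bloch p 6 = bloch q 6" "bloch p 7 = bloch q 7" using ag unfolding agree_8 by auto
  have h1p: "(bloch q 5)\<^sup>2 + (bloch q 6)\<^sup>2 + (bloch q 7)\<^sup>2 = rr q" using H1[OF q] by simp
  have zz: "rr q * (1 - rr q) * (rr q - (bloch q 2)\<^sup>2) = 0" using z by simp
  note p1 = rowU0[OF h1p H2_1[OF p(1), unfolded e] H3_11[OF p(1), unfolded e] zz]
  note q1 = rowU0[OF h1p H2_1[OF q] H3_11[OF q] zz]
  have rn: "rr q \<noteq> 0" using r by simp
  have "bloch p 8 = bloch q 8" using p1(1) q1(1) rn by (metis mult_left_cancel)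
  moreover have "bloch p 9 = bloch q 9" using p1(2) q1(2) rn by (metis mult_left_cancel)
  moreover have "bloch p 10 = bloch q 10" using p1(3) q1(3) rn by (metis mult_left_cancel)
  moreover have "i \<in> {8,9,10}" using i by auto
  ultimately show "bloch p i = bloch q i" by auto
qed

lemma row1_one:
  assumes q: "pure_state q" and r: "0 < rr q"
  shows "DD q 8 = 0 \<or> DD q 9 = 0 \<or> DD q 10 = 0"
proof -
  have h1: "(bloch q 5)\<^sup>2 + (bloch q 6)\<^sup>2 + (bloch q 7)\<^sup>2 = rr q" using H1[OF q] by simp
  show ?thesis
  proof (cases "bloch q 7 = 0")
    case False
    have "DD q 10 = 0"
    proof (rule stage_single[OF q])
      fix p assume p: "pure_state p" "agree 10 p q"
      then have e: "bloch p 2 = bloch q 2" "bloch p 5 = bloch q 5" "bloch p 6 = bloch q 6" "bloch p 7 = bloch q 7"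
        "bloch p 8 = bloch q 8" "bloch p 9 = bloch q 9" unfolding agree_10 by auto
      have "bloch p 10 * bloch q 7 = bloch q 10 * bloch q 7" using H2_1[OF p(1)] H2_1[OF q] unfolding e by linarith
      then show "bloch p 10 = bloch q 10" using False by simp
    qed
    then show ?thesis by simp
  next
    case z7: True
    show ?thesis
    proof (cases "bloch q 6 = 0")
      case False
      have "DD q 9 = 0"
      proof (rule stage_single[OF q])
        fix p assume p: "pure_state p" "agree 9 p q"
        then have e: "bloch p 2 = bloch q 2" "bloch p 5 = bloch q 5" "bloch p 6 = bloch q 6" "bloch p 7 = bloch q 7"
          "bloch p 8 = bloch q 8" unfolding agree_9 by auto
        have a: "bloch q 8 * bloch q 5 + bloch p 9 * bloch q 6 = bloch q 2" using H2_1[OF p(1)] z7 unfolding e by simp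
        have b: "bloch q 8 * bloch q 5 + bloch q 9 * bloch q 6 = bloch q 2" using H2_1[OF q] z7 by simp
        have "bloch p 9 * bloch q 6 = bloch q 9 * bloch q 6" using a b by linarith
        then show "bloch p 9 = bloch q 9" using False by (metis mult_right_cancel)
      qed
      then show ?thesis by simp
    next
      case z6: True
      then have n5: "bloch q 5 \<noteq> 0" using h1 z7 r by auto
      have "DD q 8 = 0"
      proof (rule stage_single[OF q])
        fix p assume p: "pure_state p" "agree 8 p q"
        then have e: "bloch p 2 = bloch q 2" "bloch p 5 = bloch q 5" "bloch p 6 = bloch q 6" "bloch p 7 = bloch q 7"
          unfolding agree_8 by auto
        have "bloch p 8 * bloch q 5 = bloch q 8 * bloch q 5" using H2_1[OF p(1)] H2_1[OF q] z7 z6 unfolding e by simp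
        then show "bloch p 8 = bloch q 8" using n5 by simp
      qed
      then show ?thesis by simp
    qed
  qed
qed

lemma row2_one:
  assumes q: "pure_state q" and r: "0 < rr q"
  shows "DD q 11 = 0 \<or> DD q 12 = 0 \<or> DD q 13 = 0"
proof -
  have h1: "(bloch q 5)\<^sup>2 + (bloch q 6)\<^sup>2 + (bloch q 7)\<^sup>2 = rr q" using H1[OF q] by simp
  show ?thesis
  proof (cases "bloch q 7 = 0")
    case False
    have "DD q 13 = 0"
    proof (rule stage_single[OF q])
      fix p assume p: "pure_state p" "agree 13 p q"
      then have e: "bloch p 3 = bloch q 3" "bloch p 5 = bloch q 5" "bloch p 6 = bloch q 6" "bloch p 7 = bloch q 7"
        "bloch p 11 = bloch q 11" "bloch p 12 = bloch q 12" unfolding agree_13 by auto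
      have "bloch p 13 * bloch q 7 = bloch q 13 * bloch q 7" using H2_2[OF p(1)] H2_2[OF q] unfolding e by linarith
      then show "bloch p 13 = bloch q 13" using False by simp
    qed
    then show ?thesis by simp
  next
    case z7: True
    show ?thesis
    proof (cases "bloch q 6 = 0")
      case False
      have "DD q 12 = 0"
      proof (rule stage_single[OF q])
        fix p assume p: "pure_state p" "agree 12 p q"
        then have e: "bloch p 3 = bloch q 3" "bloch p 5 = bloch q 5" "bloch p 6 = bloch q 6" "bloch p 7 = bloch q 7"
          "bloch p 11 = bloch q 11" unfolding agree_12 by auto
        have a: "bloch q 11 * bloch q 5 + bloch p 12 * bloch q 6 = bloch q 3" using H2_2[OF p(1)] z7 unfolding e by simp
        have b: "bloch q 11 * bloch q 5 + bloch q 12 * bloch q 6 = bloch q 3" using H2_2[OF q] z7 by simp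
        have "bloch p 12 * bloch q 6 = bloch q 12 * bloch q 6" using a b by linarith
        then show "bloch p 12 = bloch q 12" using False by (metis mult_right_cancel)
      qed
      then show ?thesis by simp
    next
      case z6: True
      then have n5: "bloch q 5 \<noteq> 0" using h1 z7 r by auto
      have "DD q 11 = 0"
      proof (rule stage_single[OF q])
        fix p assume p: "pure_state p" "agree 11 p q"
        then have e: "bloch p 3 = bloch q 3" "bloch p 5 = bloch q 5" "bloch p 6 = bloch q 6" "bloch p 7 = bloch q 7"
          unfolding agree_11 by auto
        have "bloch p 11 * bloch q 5 = bloch q 11 * bloch q 5" using H2_2[OF p(1)] H2_2[OF q] z7 z6 unfolding e by simp
        then show "bloch p 11 = bloch q 11" using n5 by simp
      qed
      then show ?thesis by simp
    qed
  qed
qed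

lemma C_pos:
  assumes q: "pure_state q" and r: "0 < rr q"
  shows "DD q 8 + DD q 9 + DD q 10 + DD q 11 + DD q 12 + DD q 13 + DD q 14 + DD q 15 + DD q 16 \<le> 2 * (1 - rr q)"
proof -
  note B = dC_pos[OF q r]
  have z3: "DD q 14 = 0" "DD q 15 = 0" "DD q 16 = 0" using row3_single[OF q] by auto
  show ?thesis
  proof (cases "bloch q 3 = 0 \<and> bloch q 4 = 0")
    case False
    then have nz: "(bloch q 3)\<^sup>2 + (bloch q 4)\<^sup>2 \<noteq> 0" by simp
    have z2: "DD q 11 = 0" "DD q 12 = 0" "DD q 13 = 0" using row2_single[OF q nz] by auto
    show ?thesis using row1_one[OF q r] B z2 z3 by auto
  next
    case True
    have z1: "DD q 8 = 0" "DD q 9 = 0" "DD q 10 = 0" using row1_single[OF q r] True by auto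
    show ?thesis using row2_one[OF q r] B z1 z3 by auto
  qed
qed


lemma sq3_zero:
  fixes a b c :: real
  assumes "a\<^sup>2 + b\<^sup>2 + c\<^sup>2 = 0"
  shows "a = 0" "b = 0" "c = 0"
proof -
  have "a\<^sup>2 = 0" "b\<^sup>2 = 0" "c\<^sup>2 = 0" using assms zero_le_power2[of a] zero_le_power2[of b] zero_le_power2[of c] by linarith+
  then show "a = 0" "b = 0" "c = 0" by simp_all
qed

lemma C_zero:
  assumes q: "pure_state q" and r: "rr q = 0"
  shows "DD q 8 + DD q 9 + DD q 10 + DD q 11 + DD q 12 + DD q 13 + DD q 14 + DD q 15 + DD q 16 \<le> 2"
proof -
  have za: "bloch q 2 = 0" "bloch q 3 = 0" "bloch q 4 = 0" by (rule sq3_zero[OF r])+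
  have zb0: "(bloch q 5)\<^sup>2 + (bloch q 6)\<^sup>2 + (bloch q 7)\<^sup>2 = 0" using H1[OF q] r by linarith
  have zb: "bloch q 5 = 0" "bloch q 6 = 0" "bloch q 7 = 0" by (rule sq3_zero[OF zb0])+
  note z = za zb
  have r1: "(bloch q 8)\<^sup>2 + (bloch q 9)\<^sup>2 + (bloch q 10)\<^sup>2 = 1" using H3_11[OF q] z by (simp add: power2_eq_square)
  have r2: "(bloch q 11)\<^sup>2 + (bloch q 12)\<^sup>2 + (bloch q 13)\<^sup>2 = 1" using H3_22[OF q] z by (simp add: power2_eq_square)
  have q11le: "(bloch q 11)\<^sup>2 \<le> 1" using r2 zero_le_power2[of "bloch q 12"] zero_le_power2[of "bloch q 13"] by linarith
  have d8: "DD q 8 = (bloch q 8)\<^sup>2"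
    by (rule stage_sym[OF q, where T=Tz1]) (auto simp: agree_8 Tz1_pure bnd z)
  have d9: "DD q 9 = (bloch q 9)\<^sup>2"
    by (rule stage_sym[OF q, where T=Tx2]) (auto simp: agree_9 Tx2_pure bnd z)
  have d10: "DD q 10 \<le> (bloch q 10)\<^sup>2"
  proof (rule stage_two[OF q])
    fix p assume p: "pure_state p" "agree 10 p q"
    then have e: "bloch p 2 = 0" "bloch p 3 = 0" "bloch p 4 = 0" "bloch p 8 = bloch q 8" "bloch p 9 = bloch q 9"
      unfolding agree_10 z by auto
    show "(bloch p 10)\<^sup>2 = (bloch q 10)\<^sup>2" using H3_11[OF p(1)] r1 unfolding e by (simp add: power2_eq_square)
  qed
  have d11: "DD q 11 = (bloch q 11)\<^sup>2"
    by (rule stage_sym[OF q, where T=Tx1]) (auto simp: agree_11 Tx1_pure bnd z)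
  have d13: "DD q 13 \<le> (bloch q 13)\<^sup>2"
  proof (rule stage_two[OF q])
    fix p assume p: "pure_state p" "agree 13 p q"
    then have e: "bloch p 2 = 0" "bloch p 3 = 0" "bloch p 4 = 0" "bloch p 11 = bloch q 11" "bloch p 12 = bloch q 12"
      unfolding agree_13 z by auto
    show "(bloch p 13)\<^sup>2 = (bloch q 13)\<^sup>2" using H3_22[OF p(1)] r2 unfolding e by (simp add: power2_eq_square)
  qed
  have z3: "DD q 14 = 0" "DD q 15 = 0" "DD q 16 = 0" using row3_single[OF q] by auto
  have d1213: "DD q 12 + DD q 13 \<le> 1 - (bloch q 11)\<^sup>2"
  proof (cases "\<forall>p. pure_state p \<longrightarrow> agree 12 p q \<longrightarrow> bloch p 12 = bloch q 12")
    case True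
    then have "DD q 12 = 0" by (intro stage_single[OF q]) auto
    then show ?thesis using d13 r2 zero_le_power2[of "bloch q 12"] by linarith
  next
    case False
    then obtain p0 where p0: "pure_state p0" "agree 12 p0 q" "bloch p0 12 \<noteq> bloch q 12" by blast
    show ?thesis
    proof (cases "bloch q 10 = 0")
      case False
      have "DD q 13 = 0"
      proof (rule stage_single[OF q])
        fix p assume p: "pure_state p" "agree 13 p q"
        then have e: "bloch p 2 = 0" "bloch p 3 = 0" "bloch p 8 = bloch q 8" "bloch p 9 = bloch q 9" "bloch p 10 = bloch q 10"
          "bloch p 11 = bloch q 11" "bloch p 12 = bloch q 12" unfolding agree_13 z by auto
        have a: "bloch q 8 * bloch q 11 + bloch q 9 * bloch q 12 + bloch q 10 * bloch p 13 = 0" using H3_12[OF p(1)] z unfolding e by simp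
        have b: "bloch q 8 * bloch q 11 + bloch q 9 * bloch q 12 + bloch q 10 * bloch q 13 = 0" using H3_12[OF q] z by simp
        have "bloch q 10 * bloch p 13 = bloch q 10 * bloch q 13" using a b by linarith
        then show "bloch p 13 = bloch q 13" using False by (metis mult_left_cancel)
      qed
      moreover have "DD q 12 \<le> (sqrt (1 - (bloch q 11)\<^sup>2))\<^sup>2"
      proof (rule stage_A[OF q, where a=0 and \<rho>=1])
        fix p assume p: "pure_state p" "agree 12 p q"
        then have e: "bloch p 2 = 0" "bloch p 3 = 0" "bloch p 4 = 0" "bloch p 11 = bloch q 11"
          unfolding agree_12 z by auto
        have h: "bloch q 11 * bloch q 11 + bloch p 12 * bloch p 12 + bloch p 13 * bloch p 13 = 1" using H3_22[OF p(1)] unfolding e by simp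
        have "0 \<le> bloch p 13 * bloch p 13" by simp
        then have "(bloch p 12)\<^sup>2 \<le> 1 - (bloch q 11)\<^sup>2" using h unfolding power2_eq_square by linarith
        then have "\<bar>bloch p 12\<bar> \<le> sqrt (1 - (bloch q 11)\<^sup>2)" by (metis power2_abs real_le_rsqrt)
        then show "0 - sqrt (1 - (bloch q 11)\<^sup>2) * 1 \<le> bloch p 12 \<and> bloch p 12 \<le> 0 + sqrt (1 - (bloch q 11)\<^sup>2) * 1"
          by (simp add: abs_le_iff; argo)
      qed (use q11le in auto)
      moreover have "(sqrt (1 - (bloch q 11)\<^sup>2))\<^sup>2 = 1 - (bloch q 11)\<^sup>2"
        using q11le by simp
      ultimately show ?thesis by simp
    next
      case z10: True
      have e0: "bloch p0 2 = 0" "bloch p0 3 = 0" "bloch p0 8 = bloch q 8" "bloch p0 9 = bloch q 9" "bloch p0 10 = 0"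
        "bloch p0 11 = bloch q 11" using p0(2) z10 unfolding agree_12 z by auto
      have a: "bloch q 8 * bloch q 11 + bloch q 9 * bloch p0 12 = 0" using H3_12[OF p0(1)] z z10 unfolding e0 by simp
      have b: "bloch q 8 * bloch q 11 + bloch q 9 * bloch q 12 = 0" using H3_12[OF q] z z10 by simp
      have "bloch q 9 * bloch p0 12 = bloch q 9 * bloch q 12" using a b by linarith
      then have z9: "bloch q 9 = 0" using p0(3) by simp
      have "DD q 12 = (bloch q 12)\<^sup>2"
        by (rule stage_sym[OF q, where T=Tx2]) (auto simp: agree_12 Tx2_pure bnd z z9 z10)
      then show ?thesis using d13 r2 by linarith
    qed
  qed
  show ?thesis using d8 d9 d10 d11 d1213 z3 r1 by linarith
qed

lemma sum_2_16: "(\<Sum>i=(2::nat)..16. f i) = f 2 + f 3 + f 4 + f 5 + f 6 + f 7 + f 8 + f 9 + f 10 + f 11 + f 12 + f 13 + f 14 + f 15 + (f 16::real)"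
proof -
  have "{2..16::nat} = {2,3,4,5,6,7,8,9,10,11,12,13,14,15,16}" by (auto simp: numeral_eq_Suc le_Suc_eq)
  then show ?thesis by (simp add: add.assoc)
qed

lemma I_expand: "I_chi2_post q = DD q 2 + DD q 3 + DD q 4 + DD q 5 + DD q 6 + DD q 7 + DD q 8 + DD q 9 + DD q 10 + DD q 11 + DD q 12 + DD q 13 + DD q 14 + DD q 15 + DD q 16"
  unfolding I_chi2_post_def by (rule sum_2_16)

lemma upper: assumes q: "pure_state q" shows "I_chi2_post q \<le> 2"
proof -
  note ab = d_ab[OF q]
  have h1: "(bloch q 5)\<^sup>2 + (bloch q 6)\<^sup>2 + (bloch q 7)\<^sup>2 = rr q" using H1[OF q] by simp
  have r1: "rr q \<le> 1" using H0[OF q] .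
  have C: "DD q 8 + DD q 9 + DD q 10 + DD q 11 + DD q 12 + DD q 13 + DD q 14 + DD q 15 + DD q 16 \<le> 2 * (1 - rr q)"
  proof (cases "rr q = 0")
    case True then show ?thesis using C_zero[OF q] by simp
  next
    case False
    have "0 \<le> rr q" by simp
    then have "0 < rr q" using False by linarith
    then show ?thesis using C_pos[OF q] by simp
  qed
  show ?thesis unfolding I_expand using ab h1 C by argo
qed

definition ket00 :: "nat \<Rightarrow> complex" where "ket00 = (\<lambda>r. if r = 0 then 1 else 0)"
definition ket01 :: "nat \<Rightarrow> complex" where "ket01 = (\<lambda>r. if r = 1 then 1 else 0)"

lemma ket00_pure: "pure_state ket00" unfolding pure_state_def sum4 ket00_def by simp
lemma ket01_pure: "pure_state ket01" unfolding pure_state_def sum4 ket01_def by simp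

lemma ket00_bloch: "bloch ket00 2 = 0" "bloch ket00 3 = 0" "bloch ket00 4 = 1"
  "bloch ket00 5 = 0" "bloch ket00 6 = 0" "bloch ket00 7 = 1"
  by (simp_all add: bloch_2 bloch_3 bloch_4 bloch_5 bloch_6 bloch_7 bp_1 bp_2 bp_3 bp_4 bp_5 bp_6 bp_7 ket00_def)

lemma ket01_bloch: "bloch ket01 2 = 0" "bloch ket01 3 = 0" "bloch ket01 4 = 1"
  "bloch ket01 5 = 0" "bloch ket01 6 = 0" "bloch ket01 7 = -1"
  by (simp_all add: bloch_2 bloch_3 bloch_4 bloch_5 bloch_6 bloch_7 bp_1 bp_2 bp_3 bp_4 bp_5 bp_6 bp_7 ket01_def)

lemma attained: "I_chi2_post ket00 = 2"
proof -
  note q = ket00_pure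
  note ab = d_ab[OF q]
  have r: "rr ket00 = 1" using ket00_bloch by simp
  have C: "DD ket00 i = 0" if "8 \<le> i" "i \<le> 16" for i using C_r1[OF q r that] .
  have d7: "DD ket00 7 = (bloch ket00 7)\<^sup>2"
  proof (rule stage_two_eq[OF q _ ket01_pure])
    fix p assume p: "pure_state p" "agree 7 p ket00"
    then have e: "bloch p 2 = bloch ket00 2" "bloch p 3 = bloch ket00 3" "bloch p 4 = bloch ket00 4"
      "bloch p 5 = bloch ket00 5" "bloch p 6 = bloch ket00 6" unfolding agree_7 by auto
    show "(bloch p 7)\<^sup>2 = (bloch ket00 7)\<^sup>2" using H1[OF p(1)] H1[OF q] unfolding e by linarith
  next
    show "agree 7 ket01 ket00" unfolding agree_7 using ket00_bloch ket01_bloch pure_n[OF ket00_pure] pure_n[OF ket01_pure] by simp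
    show "bloch ket01 7 = - bloch ket00 7" using ket00_bloch ket01_bloch by simp
  qed
  show ?thesis unfolding I_expand using ab d7 C[of 8] C[of 9] C[of 10] C[of 11] C[of 12] C[of 13] C[of 14] C[of 15] C[of 16]
    ket00_bloch by simp
qed

theorem theorem1:
  shows "(\<forall>psi. pure_state psi \<longrightarrow> I_chi2_post psi \<le> 2) \<and>
         (\<exists>psi. pure_state psi \<and> I_chi2_post psi = 2)"
  using upper attained ket00_pure by blast

end
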